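(* Let $k \subseteq K \subseteq E$ be fields and $d \geqslant 0$ an integer. Fix an algebraic closure $\overline{E}$ of $E$ and let $\overline{K}$ be the algebraic closure of $K$ in $\overline{E}$; all level $d$ closures below are taken inside these. (a) Let $K \subseteq L \subseteq \overline{K}$ be an intermediate field with $[L:K] < \infty$. Then $\operatorname{lev}_k(L/K) \leqslant d$ if and only if $L \subseteq K^{(d)}$. (b) $K^{(d)} \subseteq E^{(d)}$. Moreover, if $[E:K] < \infty$ and $\operatorname{lev}_k(E/K) \leqslant d$, then $K^{(d)} = E^{(d)}$. (c) $E^{(d)} = \bigcup E_{\rm f.g.}^{(d)}$, where the union is over all intermediate fields $K \subseteq E_{\rm f.g.} \subseteq E$ with $E_{\rm f.g.}$ finitely generated over $K$. (d) $(K^{(d)})^{(n)} = K^{(n)}$ for every $n \geqslant d$. In particular, $K^{(d)}$ is closed at level $d$.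
   Context: For fields $k \subseteq K$ and a finite-dimensional $K$-algebra $A$, $A$ descends to an intermediate field $k \subseteq K_0 \subseteq K$ if there is a $K_0$-algebra $A_0$ with $A \simeq A_0 \otimes_{K_0} K$; $\operatorname{ed}_k(A/K)$ is the minimum of $\operatorname{trdeg}_k(K_0)$ over such $K_0$. For a finite field extension $L/K$, $\operatorname{lev}_k(L/K)$ is the smallest $d \geq 0$ such that there is a tower $K = K_0 \subseteq \dots \subseteq K_m$ of finite field extensions with $\operatorname{ed}_k(K_i/K_{i-1}) \leq d$ for all $i$ and $L$ embedding into $K_m$ over $K$. For a field $F \supseteq k$ with algebraic closure $\overline{F}$, the level $d$ closure $F^{(d)}$ of $F$ in $\overline{F}$ is the compositum of all intermediate fields $F \subseteq L \subseteq \overline{F}$ with $[L:F] < \infty$ and $\operatorname{lev}_k(L/F) \leq d$. $F$ is closed at level $d$ if $F = F^{(d)}$. *)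

theory Defs
  imports "HOL-Computational_Algebra.Polynomial"
begin

text \<open>All fields are subfields of one ambient field (the type 'a), which in the
  statement plays the role of the fixed algebraic closure of E.\<close>

definition is_subfield :: "'a::field set \<Rightarrow> bool" where
  "is_subfield F \<longleftrightarrow> 0 \<in> F \<and> 1 \<in> F \<and>
     (\<forall>x\<in>F. \<forall>y\<in>F. x + y \<in> F \<and> x * y \<in> F) \<and>
     (\<forall>x\<in>F. - x \<in> F \<and> inverse x \<in> F)"

definition adjoin :: "'a::field set \<Rightarrow> 'a set \<Rightarrow> 'a set" where
  "adjoin F S = \<Inter>{M. is_subfield M \<and> F \<union> S \<subseteq> M}"

definition algebraic_over :: "'a::field set \<Rightarrow> 'a \<Rightarrow> bool" where
  "algebraic_over F x \<longleftrightarrow> (\<exists>p. p \<noteq> 0 \<and> (\<forall>i. coeff p i \<in> F) \<and> poly p x = 0)"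

definition alg_closure_in :: "'a::field set \<Rightarrow> 'a set" where
  "alg_closure_in F = {x. algebraic_over F x}"

definition span_over :: "'a::field set \<Rightarrow> 'a set \<Rightarrow> 'a set" where
  "span_over F B = {\<Sum>x\<in>T. c x * x | T c. finite T \<and> T \<subseteq> B \<and> (\<forall>x\<in>T. c x \<in> F)}"

definition lin_indep_over :: "'a::field set \<Rightarrow> 'a set \<Rightarrow> bool" where
  "lin_indep_over F T \<longleftrightarrow>
     (\<forall>U c. finite U \<and> U \<subseteq> T \<and> (\<forall>x\<in>U. c x \<in> F) \<and> (\<Sum>x\<in>U. c x * x) = 0
        \<longrightarrow> (\<forall>x\<in>U. c x = 0))"

definition finite_ext :: "'a::field set \<Rightarrow> 'a set \<Rightarrow> bool" where
  "finite_ext K L \<longleftrightarrow> K \<subseteq> L \<and> (\<exists>S. finite S \<and> S \<subseteq> L \<and> span_over K S = L)"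

text \<open>The finite-dimensional K-algebra A (a subfield containing K) descends to
  the subfield K0 \<subseteq> K: there is a K0-algebra A0 with A0 \<otimes>_K0 K \<cong> A.
  Written out: A0 is (the image of) a K0-subalgebra B of A such that the natural map
  B \<otimes>_K0 K \<rightarrow> A, b \<otimes> c \<mapsto> c b, is bijective, i.e. B spans A over K and
  K0-linearly independent elements of B stay K-linearly independent.\<close>
definition descends :: "'a::field set \<Rightarrow> 'a set \<Rightarrow> 'a set \<Rightarrow> bool" where
  "descends K A K0 \<longleftrightarrow> (\<exists>B. K0 \<subseteq> B \<and> B \<subseteq> A \<and>
      (\<forall>x\<in>B. \<forall>y\<in>B. x + y \<in> B \<and> x * y \<in> B \<and> - x \<in> B) \<and>
      span_over K B = A \<and>
      (\<forall>T. T \<subseteq> B \<and> lin_indep_over K0 T \<longrightarrow> lin_indep_over K T))"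

definition alg_indep :: "'a::field set \<Rightarrow> 'a set \<Rightarrow> bool" where
  "alg_indep k S \<longleftrightarrow> (\<forall>s\<in>S. \<not> algebraic_over (adjoin k (S - {s})) s)"

definition trdeg_le :: "'a::field set \<Rightarrow> 'a set \<Rightarrow> nat \<Rightarrow> bool" where
  "trdeg_le k K0 d \<longleftrightarrow> (\<exists>S. S \<subseteq> K0 \<and> alg_indep k S \<and>
      (\<forall>x\<in>K0. algebraic_over (adjoin k S) x) \<and> finite S \<and> card S \<le> d)"

definition ed_le :: "'a::field set \<Rightarrow> 'a set \<Rightarrow> 'a set \<Rightarrow> nat \<Rightarrow> bool" where
  "ed_le k K A d \<longleftrightarrow> (\<exists>K0. is_subfield K0 \<and> k \<subseteq> K0 \<and> K0 \<subseteq> K \<and>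
      descends K A K0 \<and> trdeg_le k K0 d)"

definition lev_le :: "'a::field set \<Rightarrow> 'a set \<Rightarrow> 'a set \<Rightarrow> nat \<Rightarrow> bool" where
  "lev_le k K L d \<longleftrightarrow> (\<exists>m Ks. Ks 0 = K \<and>
      (\<forall>i<m. is_subfield (Ks (Suc i)) \<and> finite_ext (Ks i) (Ks (Suc i)) \<and>
             ed_le k (Ks i) (Ks (Suc i)) d) \<and>
      L \<subseteq> Ks m)"

definition level_closure :: "'a::field set \<Rightarrow> nat \<Rightarrow> 'a set \<Rightarrow> 'a set" where
  "level_closure k d F = adjoin F (\<Union>{L. is_subfield L \<and> F \<subseteq> L \<and>
      L \<subseteq> alg_closure_in F \<and> finite_ext F L \<and> lev_le k F L d})"

end

theory Submission
  imports Defs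
begin


lemma sf_0: "is_subfield F \<Longrightarrow> 0 \<in> F" by (simp add: is_subfield_def)
lemma sf_1: "is_subfield F \<Longrightarrow> 1 \<in> F" by (simp add: is_subfield_def)
lemma sf_add: "is_subfield F \<Longrightarrow> x \<in> F \<Longrightarrow> y \<in> F \<Longrightarrow> x + y \<in> F" by (simp add: is_subfield_def)
lemma sf_mult: "is_subfield F \<Longrightarrow> x \<in> F \<Longrightarrow> y \<in> F \<Longrightarrow> x * y \<in> F" by (simp add: is_subfield_def)
lemma sf_uminus: "is_subfield F \<Longrightarrow> x \<in> F \<Longrightarrow> - x \<in> F" by (simp add: is_subfield_def)
lemma sf_inverse: "is_subfield F \<Longrightarrow> x \<in> F \<Longrightarrow> inverse x \<in> F" by (simp add: is_subfield_def)
lemma sf_diff: "is_subfield F \<Longrightarrow> x \<in> F \<Longrightarrow> y \<in> F \<Longrightarrow> x - y \<in> F"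
  using sf_add sf_uminus by (metis diff_conv_add_uminus)
lemma sf_divide: "is_subfield F \<Longrightarrow> x \<in> F \<Longrightarrow> y \<in> F \<Longrightarrow> x / y \<in> F"
  using sf_mult sf_inverse by (metis divide_inverse)
lemma sf_power: "is_subfield F \<Longrightarrow> x \<in> F \<Longrightarrow> x ^ n \<in> F"
  by (induction n) (auto intro: sf_1 sf_mult)
lemma sf_sum: "is_subfield F \<Longrightarrow> (\<And>i. i \<in> I \<Longrightarrow> f i \<in> F) \<Longrightarrow> sum f I \<in> F"
  by (induction I rule: infinite_finite_induct) (auto intro: sf_0 sf_add)
lemma sf_prod: "is_subfield F \<Longrightarrow> (\<And>i. i \<in> I \<Longrightarrow> f i \<in> F) \<Longrightarrow> prod f I \<in> F"
  by (induction I rule: infinite_finite_induct) (auto intro: sf_1 sf_mult)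

lemma sf_Inter: "(\<And>M. M \<in> \<M> \<Longrightarrow> is_subfield M) \<Longrightarrow> is_subfield (\<Inter>\<M>)"
  unfolding is_subfield_def by blast

lemma sf_Int: "is_subfield A \<Longrightarrow> is_subfield B \<Longrightarrow> is_subfield (A \<inter> B)"
  unfolding is_subfield_def by blast

lemma sf_UNIV: "is_subfield UNIV" by (simp add: is_subfield_def)

lemma adjoin_sf: "is_subfield (adjoin F S)"
  unfolding adjoin_def by (rule sf_Inter) auto

lemma adjoin_sup: "F \<union> S \<subseteq> adjoin F S"
  unfolding adjoin_def by auto

lemma adjoin_base: "F \<subseteq> adjoin F S" and adjoin_gen: "S \<subseteq> adjoin F S"
  using adjoin_sup by auto

lemma adjoin_min: "is_subfield M \<Longrightarrow> F \<subseteq> M \<Longrightarrow> S \<subseteq> M \<Longrightarrow> adjoin F S \<subseteq> M"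
  unfolding adjoin_def by auto

lemma adjoin_mono: "F \<subseteq> F' \<Longrightarrow> S \<subseteq> S' \<Longrightarrow> adjoin F S \<subseteq> adjoin F' S'"
  by (meson adjoin_base adjoin_gen adjoin_min adjoin_sf order_trans)

lemma adjoin_empty: "is_subfield F \<Longrightarrow> adjoin F {} = F"
  by (rule subset_antisym[OF adjoin_min adjoin_base]) auto

lemma adjoin_adjoin: "adjoin (adjoin F S) T = adjoin F (S \<union> T)"
proof (rule subset_antisym)
  have 1: "adjoin F S \<subseteq> adjoin F (S \<union> T)" by (rule adjoin_mono) auto
  have 2: "T \<subseteq> adjoin F (S \<union> T)" using adjoin_gen[of "S \<union> T" F] by blast
  show "adjoin (adjoin F S) T \<subseteq> adjoin F (S \<union> T)"
    by (rule adjoin_min[OF adjoin_sf 1 2])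
  have "F \<subseteq> adjoin (adjoin F S) T" using adjoin_base[of F S] adjoin_base[of "adjoin F S" T] by blast
  moreover have "S \<subseteq> adjoin (adjoin F S) T" using adjoin_gen[of S F] adjoin_base[of "adjoin F S" T] by blast
  moreover have "T \<subseteq> adjoin (adjoin F S) T" by (rule adjoin_gen)
  ultimately have 3: "F \<subseteq> adjoin (adjoin F S) T" and 4: "S \<union> T \<subseteq> adjoin (adjoin F S) T" by auto
  show "adjoin F (S \<union> T) \<subseteq> adjoin (adjoin F S) T"
    by (rule adjoin_min[OF adjoin_sf 3 4])
qed

lemma adjoin_directed:
  assumes "is_subfield K" "K \<subseteq> E" "x \<in> adjoin E Y"
  shows "\<exists>G. finite G \<and> G \<subseteq> E \<and> x \<in> adjoin K (G \<union> Y)"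
proof -
  define Z where "Z = {z. \<exists>G. finite G \<and> G \<subseteq> E \<and> z \<in> adjoin K (G \<union> Y)}"
  have sub: "\<exists>G. finite G \<and> G \<subseteq> E \<and> a \<in> adjoin K (G \<union> Y) \<and> b \<in> adjoin K (G \<union> Y)"
    if "a \<in> Z" "b \<in> Z" for a b
  proof -
    from that obtain G1 G2 where G: "finite G1" "G1 \<subseteq> E" "a \<in> adjoin K (G1 \<union> Y)"
      "finite G2" "G2 \<subseteq> E" "b \<in> adjoin K (G2 \<union> Y)" unfolding Z_def by blast
    have m1: "adjoin K (G1 \<union> Y) \<subseteq> adjoin K ((G1 \<union> G2) \<union> Y)" by (rule adjoin_mono) auto
    have m2: "adjoin K (G2 \<union> Y) \<subseteq> adjoin K ((G1 \<union> G2) \<union> Y)" by (rule adjoin_mono) auto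
    show ?thesis
      apply (rule exI[of _ "G1 \<union> G2"])
      using G m1 m2 by blast
  qed
  have Zsf: "is_subfield Z"
    unfolding is_subfield_def
  proof (intro conjI ballI)
    show "0 \<in> Z" unfolding Z_def using adjoin_sf[THEN sf_0, of K "{} \<union> Y"] by blast
    show "1 \<in> Z" unfolding Z_def using adjoin_sf[THEN sf_1, of K "{} \<union> Y"] by blast
    fix a b assume ab: "a \<in> Z" "b \<in> Z"
    from sub[OF ab] obtain G where G: "finite G" "G \<subseteq> E" "a \<in> adjoin K (G \<union> Y)" "b \<in> adjoin K (G \<union> Y)"
      by blast
    have "a + b \<in> adjoin K (G \<union> Y)" "a * b \<in> adjoin K (G \<union> Y)"
      using G(3,4) by (auto intro: adjoin_sf[THEN sf_add] adjoin_sf[THEN sf_mult])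
    then show "a + b \<in> Z" "a * b \<in> Z" unfolding Z_def using G(1,2) by blast+
  next
    fix a assume "a \<in> Z"
    then obtain G where G: "finite G" "G \<subseteq> E" "a \<in> adjoin K (G \<union> Y)" unfolding Z_def by blast
    have "- a \<in> adjoin K (G \<union> Y)" "inverse a \<in> adjoin K (G \<union> Y)"
      using G(3) by (auto intro: adjoin_sf[THEN sf_uminus] adjoin_sf[THEN sf_inverse])
    then show "- a \<in> Z" "inverse a \<in> Z" unfolding Z_def using G(1,2) by blast+
  qed
  have EZ: "E \<subseteq> Z"
  proof
    fix e assume e: "e \<in> E"
    have "e \<in> adjoin K ({e} \<union> Y)" using adjoin_gen[of "{e} \<union> Y" K] by blast
    then show "e \<in> Z" unfolding Z_def using e by blast
  qed
  have YZ: "Y \<subseteq> Z"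
  proof
    fix y assume "y \<in> Y"
    then have "y \<in> adjoin K ({} \<union> Y)" using adjoin_gen[of "{} \<union> Y" K] by blast
    then show "y \<in> Z" unfolding Z_def by blast
  qed
  have "adjoin E Y \<subseteq> Z" by (rule adjoin_min[OF Zsf EZ YZ])
  with assms(3) show ?thesis unfolding Z_def by blast
qed

definition pol_over :: "'a::field set \<Rightarrow> 'a poly \<Rightarrow> bool" where
  "pol_over F p \<longleftrightarrow> (\<forall>i. coeff p i \<in> F)"

lemma pol_over_0: "is_subfield F \<Longrightarrow> pol_over F 0"
  by (simp add: pol_over_def sf_0)

lemma pol_over_const: "is_subfield F \<Longrightarrow> c \<in> F \<Longrightarrow> pol_over F [:c:]"
  by (simp add: pol_over_def coeff_pCons sf_0 split: nat.splits)

lemma pol_over_pCons: "is_subfield F \<Longrightarrow> a \<in> F \<Longrightarrow> pol_over F p \<Longrightarrow> pol_over F (pCons a p)"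
  by (simp add: pol_over_def coeff_pCons split: nat.splits)

lemma pol_over_pCons_iff: "pol_over F (pCons a p) \<longleftrightarrow> a \<in> F \<and> pol_over F p"
  unfolding pol_over_def coeff_pCons by (auto split: nat.splits)

lemma pol_over_add: "is_subfield F \<Longrightarrow> pol_over F p \<Longrightarrow> pol_over F q \<Longrightarrow> pol_over F (p + q)"
  by (simp add: pol_over_def sf_add)

lemma pol_over_uminus: "is_subfield F \<Longrightarrow> pol_over F p \<Longrightarrow> pol_over F (- p)"
  by (simp add: pol_over_def sf_uminus)

lemma pol_over_diff: "is_subfield F \<Longrightarrow> pol_over F p \<Longrightarrow> pol_over F q \<Longrightarrow> pol_over F (p - q)"
  by (simp add: pol_over_def sf_diff)

lemma pol_over_smult: "is_subfield F \<Longrightarrow> c \<in> F \<Longrightarrow> pol_over F p \<Longrightarrow> pol_over F (smult c p)"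
  by (simp add: pol_over_def sf_mult)

lemma pol_over_monom: "is_subfield F \<Longrightarrow> c \<in> F \<Longrightarrow> pol_over F (monom c n)"
  by (simp add: pol_over_def coeff_monom sf_0)

lemma pol_over_mult: "is_subfield F \<Longrightarrow> pol_over F p \<Longrightarrow> pol_over F q \<Longrightarrow> pol_over F (p * q)"
proof (induction p)
  case 0
  then show ?case by (simp add: pol_over_0)
next
  case (pCons a p)
  then have "a \<in> F" "pol_over F p" by (auto simp: pol_over_pCons_iff)
  with pCons show ?case
    by (auto simp: pol_over_add pol_over_smult pol_over_pCons sf_0)
qed

lemma pol_over_sum: "is_subfield F \<Longrightarrow> (\<And>i. i \<in> I \<Longrightarrow> pol_over F (f i)) \<Longrightarrow> pol_over F (sum f I)"
  by (induction I rule: infinite_finite_induct) (auto intro: pol_over_0 pol_over_add)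

lemma pol_over_mono: "F \<subseteq> G \<Longrightarrow> pol_over F p \<Longrightarrow> pol_over G p"
  by (auto simp: pol_over_def)

lemma poly_in_ring:
  assumes R: "F \<subseteq> R" "0 \<in> R" "\<And>a b. a \<in> R \<Longrightarrow> b \<in> R \<Longrightarrow> a + b \<in> R"
    "\<And>a b. a \<in> R \<Longrightarrow> b \<in> R \<Longrightarrow> a * b \<in> R"
    and "pol_over F p" "z \<in> R"
  shows "poly p z \<in> R"
  using assms(5)
proof (induction p)
  case 0 then show ?case using R by simp
next
  case (pCons a p)
  then show ?case using R \<open>z \<in> R\<close> by (auto simp: pol_over_pCons_iff)
qed

lemma poly_in_sf: "is_subfield M \<Longrightarrow> F \<subseteq> M \<Longrightarrow> pol_over F p \<Longrightarrow> z \<in> M \<Longrightarrow> poly p z \<in> M"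
  by (rule poly_in_ring[of F M]) (auto intro: sf_0 sf_add sf_mult)

lemma pol_over_divmod:
  assumes F: "is_subfield F" and h: "pol_over F h" "lead_coeff h = 1"
  shows "pol_over F p \<Longrightarrow> \<exists>q r. pol_over F q \<and> pol_over F r \<and> p = q * h + r \<and> (r = 0 \<or> degree r < degree h)"
proof (induction "degree p" arbitrary: p rule: less_induct)
  case less
  show ?case
  proof (cases "p = 0 \<or> degree p < degree h")
    case True
    then show ?thesis using less F by (intro exI[of _ 0] exI[of _ p]) (auto simp: pol_over_0)
  next
    case False
    then have p0: "p \<noteq> 0" and dle: "degree h \<le> degree p" by auto
    show ?thesis
    proof (cases "degree h = 0")
      case True
      then have "h = [:coeff h 0:]" by (simp add: degree_0_id)
      then have "h = 1" using h True by (simp add: one_pCons)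
      then show ?thesis using less F by (intro exI[of _ p] exI[of _ 0]) (auto simp: pol_over_0)
    next
      case hpos: False
      define c where "c = lead_coeff p"
      define k where "k = degree p - degree h"
      define p' where "p' = p - monom c k * h"
      have cF: "c \<in> F" using less.prems by (simp add: c_def pol_over_def)
      have p'F: "pol_over F p'" unfolding p'_def
        by (intro pol_over_diff pol_over_mult pol_over_monom F cF less.prems h)
      have co: "coeff p' i = 0" if "i \<ge> degree p" for i
      proof (cases "i = degree p")
        case True
        then have "coeff (monom c k * h) i = c * coeff h (degree h)"
          using dle by (simp add: coeff_monom_mult k_def)
        then show ?thesis using True h by (simp add: p'_def c_def)
      next
        case False
        with that have gt: "i > degree p" by simp
        then have "coeff p i = 0" by (simp add: coeff_eq_0)
        moreover have "coeff (monom c k * h) i = 0"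
          using gt dle by (simp add: coeff_monom_mult k_def coeff_eq_0)
        ultimately show ?thesis by (simp add: p'_def)
      qed
      have dp: "degree p > 0" using hpos dle by simp
      have "degree p' \<le> degree p - 1"
        by (rule degree_le) (use co dp in auto)
      then have "degree p' < degree p" using dp by simp
      from less.hyps[OF this p'F] obtain q r where qr: "pol_over F q" "pol_over F r" "p' = q * h + r"
        "r = 0 \<or> degree r < degree h" by blast
      have "p = (q + monom c k) * h + r" using qr(3) by (simp add: p'_def algebra_simps)
      moreover have "pol_over F (q + monom c k)" by (intro pol_over_add pol_over_monom F cF qr(1))
      ultimately show ?thesis using qr by blast
    qed
  qed
qed



lemma spanI: "finite T \<Longrightarrow> T \<subseteq> B \<Longrightarrow> \<forall>x\<in>T. c x \<in> F \<Longrightarrow> v = (\<Sum>x\<in>T. c x * x) \<Longrightarrow> v \<in> span_over F B"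
  unfolding span_over_def by blast

lemma span_induct:
  assumes "v \<in> span_over F B" "0 \<in> Z" "\<And>a x. a \<in> F \<Longrightarrow> x \<in> B \<Longrightarrow> a * x \<in> Z"
    "\<And>x y. x \<in> Z \<Longrightarrow> y \<in> Z \<Longrightarrow> x + y \<in> Z"
  shows "v \<in> Z"
proof -
  from assms(1) obtain T c where T: "finite T" "T \<subseteq> B" "\<forall>x\<in>T. c x \<in> F" and v: "v = (\<Sum>x\<in>T. c x * x)"
    unfolding span_over_def by blast
  have "(\<Sum>x\<in>T. c x * x) \<in> Z" using T
  proof (induction T rule: finite_induct)
    case empty then show ?case using assms by simp
  next
    case (insert x T) then show ?case using assms by simp
  qed
  with v show ?thesis by simp
qed

lemma span_0: "0 \<in> span_over F B"
  unfolding span_over_def by (rule CollectI, rule exI[of _ "{}"]) auto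

lemma span_base: "is_subfield F \<Longrightarrow> x \<in> B \<Longrightarrow> x \<in> span_over F B"
  unfolding span_over_def
  by (rule CollectI, rule exI[of _ "{x}"], rule exI[of _ "\<lambda>_. 1"]) (auto simp: sf_1)

lemma span_add:
  assumes F: "is_subfield F" and "v \<in> span_over F B" "w \<in> span_over F B"
  shows "v + w \<in> span_over F B"
proof -
  from assms(2) obtain T1 c1 where T1: "finite T1" "T1 \<subseteq> B" "\<forall>x\<in>T1. c1 x \<in> F" and v: "v = (\<Sum>x\<in>T1. c1 x * x)"
    unfolding span_over_def by blast
  from assms(3) obtain T2 c2 where T2: "finite T2" "T2 \<subseteq> B" "\<forall>x\<in>T2. c2 x \<in> F" and w: "w = (\<Sum>x\<in>T2. c2 x * x)"
    unfolding span_over_def by blast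
  define c where "c x = (if x \<in> T1 then c1 x else 0) + (if x \<in> T2 then c2 x else 0)" for x
  have "(\<Sum>x\<in>T1 \<union> T2. c x * x) = (\<Sum>x\<in>T1 \<union> T2. (if x \<in> T1 then c1 x * x else 0)) + (\<Sum>x\<in>T1 \<union> T2. (if x \<in> T2 then c2 x * x else 0))"
    unfolding sum.distrib[symmetric] by (rule sum.cong) (auto simp: c_def distrib_right)
  also have "(\<Sum>x\<in>T1 \<union> T2. (if x \<in> T1 then c1 x * x else 0)) = v"
    using T1 T2 by (simp add: sum.If_cases Int_absorb1 v)
  also have "(\<Sum>x\<in>T1 \<union> T2. (if x \<in> T2 then c2 x * x else 0)) = w"
    using T1 T2 by (simp add: sum.If_cases Int_absorb1 w)
  finally have eq: "v + w = (\<Sum>x\<in>T1 \<union> T2. c x * x)" by simp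
  have "\<forall>x\<in>T1 \<union> T2. c x \<in> F" using T1 T2 F unfolding c_def by (auto intro!: sf_add sf_0)
  then show ?thesis using T1 T2 eq by (intro spanI[of "T1 \<union> T2" _ c]) auto
qed

lemma span_smult:
  assumes F: "is_subfield F" and a: "a \<in> F" and "v \<in> span_over F B"
  shows "a * v \<in> span_over F B"
proof -
  from assms(3) obtain T c where T: "finite T" "T \<subseteq> B" "\<forall>x\<in>T. c x \<in> F" and v: "v = (\<Sum>x\<in>T. c x * x)"
    unfolding span_over_def by blast
  have "a * v = (\<Sum>x\<in>T. (a * c x) * x)" by (simp add: v sum_distrib_left mult.assoc)
  moreover have "\<forall>x\<in>T. a * c x \<in> F" using T a F by (auto intro: sf_mult)
  ultimately show ?thesis using T by (intro spanI[of T _ "\<lambda>x. a * c x"]) auto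
qed

lemma span_uminus: "is_subfield F \<Longrightarrow> v \<in> span_over F B \<Longrightarrow> - v \<in> span_over F B"
  using span_smult[of F "-1" v B] by (simp add: sf_uminus sf_1)

lemma span_diff: "is_subfield F \<Longrightarrow> v \<in> span_over F B \<Longrightarrow> w \<in> span_over F B \<Longrightarrow> v - w \<in> span_over F B"
  using span_add span_uminus by (metis diff_conv_add_uminus)

lemma span_sum: "is_subfield F \<Longrightarrow> (\<And>i. i \<in> I \<Longrightarrow> f i \<in> span_over F B) \<Longrightarrow> sum f I \<in> span_over F B"
  by (induction I rule: infinite_finite_induct) (auto intro: span_0 span_add)

lemma span_lincomb: "is_subfield F \<Longrightarrow> (\<And>i. i \<in> I \<Longrightarrow> c i \<in> F) \<Longrightarrow> (\<And>i. i \<in> I \<Longrightarrow> f i \<in> span_over F B)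
   \<Longrightarrow> (\<Sum>i\<in>I. c i * f i) \<in> span_over F B"
  by (rule span_sum) (auto intro: span_smult)

lemma span_mono: "B \<subseteq> B' \<Longrightarrow> span_over F B \<subseteq> span_over F B'"
  unfolding span_over_def by blast

lemma span_field_mono: "F \<subseteq> F' \<Longrightarrow> span_over F B \<subseteq> span_over F' B"
  unfolding span_over_def by blast

lemma span_trans: "is_subfield F \<Longrightarrow> A \<subseteq> span_over F B \<Longrightarrow> span_over F A \<subseteq> span_over F B"
  by (auto elim!: span_induct intro: span_0 span_add span_smult)

lemma span_base_subset: "is_subfield F \<Longrightarrow> B \<subseteq> span_over F B"
  by (auto intro: span_base)

lemma span_in_sf: "is_subfield M \<Longrightarrow> F \<subseteq> M \<Longrightarrow> B \<subseteq> M \<Longrightarrow> span_over F B \<subseteq> M"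
  by (auto elim!: span_induct intro: sf_0 sf_add sf_mult)

lemma span_field_in: "is_subfield F \<Longrightarrow> 1 \<in> B \<Longrightarrow> F \<subseteq> span_over F B"
  using span_smult[of F _ 1 B] span_base[of F 1 B] by auto

lemma span_finite_rep:
  assumes F: "is_subfield F" and S: "finite S" and v: "v \<in> span_over F S"
  shows "\<exists>a. (\<forall>s\<in>S. a s \<in> F) \<and> v = (\<Sum>s\<in>S. a s * s)"
proof -
  from v obtain T c where T: "finite T" "T \<subseteq> S" "\<forall>x\<in>T. c x \<in> F" and v: "v = (\<Sum>x\<in>T. c x * x)"
    unfolding span_over_def by blast
  define a where "a x = (if x \<in> T then c x else 0)" for x
  have "(\<Sum>s\<in>S. a s * s) = (\<Sum>s\<in>T. a s * s)"
    by (rule sum.mono_neutral_right) (use S T in \<open>auto simp: a_def\<close>)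
  also have "\<dots> = v" by (simp add: v a_def)
  finally show ?thesis using T F by (intro exI[of _ a]) (auto simp: a_def sf_0)
qed

lemma span_finite_sum: "is_subfield F \<Longrightarrow> finite S \<Longrightarrow> (\<forall>s\<in>S. a s \<in> F) \<Longrightarrow> (\<Sum>s\<in>S. a s * s) \<in> span_over F S"
  by (rule spanI) auto

lemma indep_subset: "lin_indep_over F T \<Longrightarrow> U \<subseteq> T \<Longrightarrow> lin_indep_over F U"
  unfolding lin_indep_over_def by blast

lemma indep_field_mono: "lin_indep_over F' T \<Longrightarrow> F \<subseteq> F' \<Longrightarrow> lin_indep_over F T"
  unfolding lin_indep_over_def by blast

lemma indep_not_in_span:
  assumes F: "is_subfield F" and ind: "lin_indep_over F U" and u: "u \<in> U"
  shows "u \<notin> span_over F (U - {u})"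
proof
  assume "u \<in> span_over F (U - {u})"
  then obtain T c where T: "finite T" "T \<subseteq> U - {u}" "\<forall>x\<in>T. c x \<in> F" and v: "u = (\<Sum>x\<in>T. c x * x)"
    unfolding span_over_def by blast
  define c' where "c' = c(u := -1)"
  have uT: "u \<notin> T" using T by auto
  have "(\<Sum>x\<in>insert u T. c' x * x) = - u + (\<Sum>x\<in>T. c' x * x)"
    using T uT by (simp add: c'_def)
  also have "(\<Sum>x\<in>T. c' x * x) = (\<Sum>x\<in>T. c x * x)"
    by (rule sum.cong) (use uT in \<open>auto simp: c'_def\<close>)
  finally have "(\<Sum>x\<in>insert u T. c' x * x) = 0" using v by simp
  moreover have "\<forall>x\<in>insert u T. c' x \<in> F" using T F uT by (auto simp: c'_def sf_1 sf_uminus)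
  moreover have "finite (insert u T)" "insert u T \<subseteq> U" using T u by auto
  ultimately have "\<forall>x\<in>insert u T. c' x = 0"
    using ind[unfolded lin_indep_over_def, rule_format, of "insert u T" c'] by blast
  then show False by (simp add: c'_def)
qed

lemma indep_insert:
  assumes F: "is_subfield F" and ind: "lin_indep_over F U" and w: "w \<notin> span_over F U"
  shows "lin_indep_over F (insert w U)"
  unfolding lin_indep_over_def
proof (intro allI impI)
  fix V c
  assume H: "finite V \<and> V \<subseteq> insert w U \<and> (\<forall>x\<in>V. c x \<in> F) \<and> (\<Sum>x\<in>V. c x * x) = 0"
  then have V: "finite V" "V \<subseteq> insert w U" "\<forall>x\<in>V. c x \<in> F" "(\<Sum>x\<in>V. c x * x) = 0" by auto
  have wU: "w \<notin> U" using w span_base[OF F] by blast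
  show "\<forall>x\<in>V. c x = 0"
  proof (cases "w \<in> V")
    case False
    then have "V \<subseteq> U" using V by auto
    then show ?thesis using ind V unfolding lin_indep_over_def by blast
  next
    case True
    have sumV: "(\<Sum>x\<in>V. c x * x) = c w * w + (\<Sum>x\<in>V - {w}. c x * x)"
      using True V by (simp add: sum.remove)
    have cw: "c w = 0"
    proof (rule ccontr)
      assume cw: "c w \<noteq> 0"
      have "w = (\<Sum>x\<in>V - {w}. (- c x / c w) * x)"
      proof -
        have "c w * w = - (\<Sum>x\<in>V - {w}. c x * x)" using sumV V(4) by (simp add: eq_neg_iff_add_eq_0)
        then have "w = - (\<Sum>x\<in>V - {w}. c x * x) / c w" using cw by (simp add: field_simps)
        also have "\<dots> = (\<Sum>x\<in>V - {w}. (- c x / c w) * x)"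
          by (simp add: sum_divide_distrib sum_negf[symmetric] field_simps)
        finally show ?thesis .
      qed
      moreover have "(\<Sum>x\<in>V - {w}. (- c x / c w) * x) \<in> span_over F U"
        by (rule span_lincomb[OF F]) (use V True F in \<open>auto intro!: sf_divide sf_uminus span_base\<close>)
      ultimately show False using w by simp
    qed
    then have "(\<Sum>x\<in>V - {w}. c x * x) = 0" using sumV V(4) by simp
    moreover have "V - {w} \<subseteq> U" using V by auto
    ultimately have "\<forall>x\<in>V - {w}. c x = 0" using ind V unfolding lin_indep_over_def by blast
    with cw show ?thesis by blast
  qed
qed

lemma dependent_in_span:
  assumes F: "is_subfield F" and nind: "\<not> lin_indep_over F T"
  shows "\<exists>t\<in>T. t \<in> span_over F (T - {t})"
proof -
  from nind obtain U c where U: "finite U" "U \<subseteq> T" "\<forall>x\<in>U. c x \<in> F" "(\<Sum>x\<in>U. c x * x) = 0"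
    and t: "\<exists>x\<in>U. c x \<noteq> 0" unfolding lin_indep_over_def by blast
  from t obtain t where tU: "t \<in> U" and ct: "c t \<noteq> 0" by blast
  have sumU: "(\<Sum>x\<in>U. c x * x) = c t * t + (\<Sum>x\<in>U - {t}. c x * x)"
    using tU U by (simp add: sum.remove)
  have "c t * t = - (\<Sum>x\<in>U - {t}. c x * x)" using sumU U(4) by (simp add: eq_neg_iff_add_eq_0)
  then have "t = - (\<Sum>x\<in>U - {t}. c x * x) / c t" using ct by (simp add: field_simps)
  also have "\<dots> = (\<Sum>x\<in>U - {t}. (- c x / c t) * x)"
    by (simp add: sum_divide_distrib sum_negf[symmetric] field_simps)
  finally have eq: "t = \<dots>" .
  have "(\<Sum>x\<in>U - {t}. (- c x / c t) * x) \<in> span_over F (T - {t})"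
    by (rule span_lincomb[OF F]) (use U tU F in \<open>auto intro!: sf_divide sf_uminus span_base\<close>)
  with eq tU U show ?thesis by auto
qed

lemma indep_no_zero:
  assumes ind: "lin_indep_over F U" and one: "1 \<in> F" shows "0 \<notin> U"
proof
  assume z: "0 \<in> U"
  have "finite {0::'a} \<and> {0} \<subseteq> U \<and> (\<forall>x\<in>{0::'a}. (\<lambda>_. 1::'a) x \<in> F) \<and> (\<Sum>x\<in>{0::'a}. (\<lambda>_. 1) x * x) = 0"
    using z one by simp
  then have "\<forall>x\<in>{0::'a}. (\<lambda>_. 1::'a) x = 0"
    using ind[unfolded lin_indep_over_def, rule_format, of "{0}" "\<lambda>_. 1"] by blast
  then show False by simp
qed

section \<open>Steinitz\<close>

lemma steinitz_aux:
  assumes F: "is_subfield F"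
  shows "finite S \<Longrightarrow> finite U \<Longrightarrow> U \<subseteq> span_over F S \<Longrightarrow> lin_indep_over F U \<Longrightarrow> card U \<le> card S"
proof (induction "card (U - S)" arbitrary: S rule: less_induct)
  case less
  show ?case
  proof (cases "U \<subseteq> S")
    case True
    then show ?thesis using less.prems by (simp add: card_mono)
  next
    case False
    then obtain u where uU: "u \<in> U" and uS: "u \<notin> S" by blast
    from span_finite_rep[OF F less.prems(1)] uU less.prems(3)
    obtain a where a: "\<forall>s\<in>S. a s \<in> F" and ua: "u = (\<Sum>s\<in>S. a s * s)" by blast
    have "\<exists>s\<in>S - U. a s \<noteq> 0"
    proof (rule ccontr)
      assume "\<not> ?thesis"
      then have "u = (\<Sum>s\<in>S \<inter> U. a s * s)"
        using ua less.prems(1) by (intro trans[OF ua] sum.mono_neutral_right) auto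
      also have "\<dots> \<in> span_over F (S \<inter> U)"
        by (rule span_finite_sum) (use F a less.prems(1) in auto)
      also have "\<dots> \<subseteq> span_over F (U - {u})" by (rule span_mono) (use uS in auto)
      finally show False using indep_not_in_span[OF F less.prems(4) uU] by simp
    qed
    then obtain s0 where s0: "s0 \<in> S" "s0 \<notin> U" "a s0 \<noteq> 0" by blast
    define S' where "S' = insert u (S - {s0})"
    have fS': "finite S'" using less.prems(1) by (simp add: S'_def)
    have cardS': "card S' = card S"
      proof -
      have "card S > 0" using less.prems(1) s0(1) by (auto simp: card_gt_0_iff)
      then show ?thesis using less.prems(1) uS s0 by (simp add: S'_def card_insert_if card_Diff_singleton)
    qed
    define R where "R = (\<Sum>s\<in>S - {s0}. a s * s)"
    have uR: "u = a s0 * s0 + R"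
      using ua s0 less.prems(1) by (simp add: sum.remove R_def)
    have e1: "(\<Sum>s\<in>S - {s0}. (- a s / a s0) * s) = - R / a s0"
    proof -
      have "(\<Sum>s\<in>S - {s0}. (- a s / a s0) * s) = (\<Sum>s\<in>S - {s0}. - (a s * s / a s0))"
        by (rule sum.cong) auto
      also have "\<dots> = - (\<Sum>s\<in>S - {s0}. a s * s / a s0)" by (rule sum_negf)
      also have "(\<Sum>s\<in>S - {s0}. a s * s / a s0) = R / a s0" by (simp add: R_def sum_divide_distrib)
      finally show ?thesis by simp
    qed
    have "s0 = (1 / a s0) * u + (\<Sum>s\<in>S - {s0}. (- a s / a s0) * s)"
      unfolding e1 uR using s0(3) by (simp add: field_simps)
    also have "\<dots> \<in> span_over F S'"
      by (intro span_add[OF F] span_smult[OF F] span_lincomb[OF F] span_base[OF F])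
         (use a s0 F in \<open>auto simp: S'_def intro!: sf_divide sf_1 sf_uminus span_base\<close>)
    finally have "s0 \<in> span_over F S'" .
    then have "S \<subseteq> span_over F S'"
    proof (intro subsetI)
      fix x assume "s0 \<in> span_over F S'" "x \<in> S"
      then show "x \<in> span_over F S'"
        by (cases "x = s0") (auto simp: S'_def intro!: span_base[OF F])
    qed
    then have "span_over F S \<subseteq> span_over F S'" by (rule span_trans[OF F])
    then have US': "U \<subseteq> span_over F S'" using less.prems(3) by blast
    have "U - S' = (U - S) - {u}" using s0(2) by (auto simp: S'_def)
    then have "card (U - S') < card (U - S)"
      using uU uS less.prems(2) by (metis Diff_iff card_Diff1_less finite_Diff)
    from less.hyps[OF this fS' less.prems(2) US' less.prems(4)] cardS' show ?thesis by simp
  qed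
qed

lemma steinitz:
  assumes F: "is_subfield F" and S: "finite S" and US: "U \<subseteq> span_over F S" and ind: "lin_indep_over F U"
  shows "finite U \<and> card U \<le> card S"
proof (cases "finite U")
  case True
  then show ?thesis using steinitz_aux[OF F S True US ind] by simp
next
  case False
  then obtain U' where U': "U' \<subseteq> U" "finite U'" "card U' = Suc (card S)"
    by (meson infinite_arbitrarily_large)
  have "card U' \<le> card S"
    by (rule steinitz_aux[OF F S U'(2)]) (use U' US ind indep_subset in auto)
  with U' show ?thesis by simp
qed

lemma indep_extend:
  assumes F: "is_subfield F" and T: "T \<subseteq> X" "lin_indep_over F T"
    and bound: "\<And>V. V \<subseteq> X \<Longrightarrow> lin_indep_over F V \<Longrightarrow> finite V \<and> card V \<le> N"
  shows "\<exists>T'. T \<subseteq> T' \<and> T' \<subseteq> X \<and> lin_indep_over F T' \<and> finite T' \<and> X \<subseteq> span_over F T'"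
proof -
  let ?P = "\<lambda>V. T \<subseteq> V \<and> V \<subseteq> X \<and> lin_indep_over F V"
  have "\<exists>V. ?P V \<and> (\<forall>W. ?P W \<longrightarrow> card W \<le> card V)"
    by (rule ex_has_greatest_nat[where b = "Suc N"]) (use T bound in \<open>auto simp: less_Suc_eq_le\<close>)
  then obtain V where V: "?P V" and mx: "\<And>W. ?P W \<Longrightarrow> card W \<le> card V" by blast
  have fV: "finite V" using bound V by blast
  have "X \<subseteq> span_over F V"
  proof
    fix x assume x: "x \<in> X"
    show "x \<in> span_over F V"
    proof (rule ccontr)
      assume nx: "x \<notin> span_over F V"
      then have "?P (insert x V)" using V x indep_insert[OF F] by auto
      then have "card (insert x V) \<le> card V" by (rule mx)
      moreover have "x \<notin> V" using nx span_base[OF F] by blast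
      ultimately show False using fV by simp
    qed
  qed
  then show ?thesis using V fV by blast
qed



lemma alg_of_mem: "is_subfield F \<Longrightarrow> x \<in> F \<Longrightarrow> algebraic_over F x"
  unfolding algebraic_over_def
  by (rule exI[of _ "[:-x, 1:]"]) (auto simp: coeff_pCons sf_0 sf_1 sf_uminus split: nat.splits)

lemma alg_mono: "F \<subseteq> G \<Longrightarrow> algebraic_over F x \<Longrightarrow> algebraic_over G x"
  unfolding algebraic_over_def by blast

lemma algebraic_over_pol: "algebraic_over F x \<longleftrightarrow> (\<exists>p. p \<noteq> 0 \<and> pol_over F p \<and> poly p x = 0)"
  unfolding algebraic_over_def pol_over_def by blast

lemma powers_poly:
  fixes z :: "'a::field" and c :: "'a \<Rightarrow> 'a"
  assumes inj: "inj_on (\<lambda>i. z ^ i) I" and fI: "finite I" and U: "U \<subseteq> (\<lambda>i. z ^ i) ` I"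
    and q_def: "q = (\<Sum>i\<in>I. monom (if z ^ i \<in> U then c (z ^ i) else 0) i)"
  shows "coeff q j = (if j \<in> I \<and> z ^ j \<in> U then c (z ^ j) else 0)"
    and "poly q z = (\<Sum>u\<in>U. c u * u)"
proof -
  show "coeff q j = (if j \<in> I \<and> z ^ j \<in> U then c (z ^ j) else 0)"
    unfolding q_def coeff_sum coeff_monom using fI by (simp add: sum.delta)
  have "poly q z = (\<Sum>i\<in>I. (if z ^ i \<in> U then c (z ^ i) else 0) * z ^ i)"
    unfolding q_def poly_sum poly_monom by simp
  also have "\<dots> = (\<Sum>i\<in>I. if z ^ i \<in> U then c (z ^ i) * z ^ i else 0)"
    by (rule sum.cong) auto
  also have "\<dots> = (\<Sum>i\<in>{i\<in>I. z ^ i \<in> U}. c (z ^ i) * z ^ i)"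
    using fI by (rule sum.inter_filter[symmetric])
  also have "\<dots> = (\<Sum>u\<in>(\<lambda>i. z ^ i) ` {i\<in>I. z ^ i \<in> U}. c u * u)"
    by (rule sum.reindex[symmetric, unfolded comp_def]) (rule inj_on_subset[OF inj], auto)
  also have "(\<lambda>i. z ^ i) ` {i\<in>I. z ^ i \<in> U} = U" using U by auto
  finally show "poly q z = (\<Sum>u\<in>U. c u * u)" .
qed

lemma fin_alg_algebraic:
  assumes F: "is_subfield F" and P: "finite P" and RP: "R \<subseteq> span_over F P"
    and one: "1 \<in> R" and mul: "\<And>x y. x \<in> R \<Longrightarrow> y \<in> R \<Longrightarrow> x * y \<in> R" and z: "z \<in> R"
  shows "algebraic_over F z"
proof -
  have pw: "z ^ i \<in> R" for i by (induction i) (use one mul z in auto)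
  define N where "N = card P"
  show ?thesis
  proof (cases "inj_on (\<lambda>i. z ^ i) {..N}")
    case False
    then obtain i j where ij: "i \<le> N" "j \<le> N" "i \<noteq> j" "z ^ i = z ^ j" unfolding inj_on_def by auto
    define a b where "a = min i j" and "b = max i j"
    have ab: "a < b" "z ^ a = z ^ b"
      using ij unfolding a_def b_def by (cases "i < j"; simp add: min_def max_def)+
    define q where "q = monom (1::'a) b - monom 1 a"
    have "coeff q b = 1" using ab by (simp add: q_def coeff_monom)
    then have "q \<noteq> 0" by auto
    moreover have "poly q z = 0" using ab by (simp add: q_def poly_monom)
    moreover have "pol_over F q" unfolding q_def by (intro pol_over_diff pol_over_monom F sf_1)
    ultimately show ?thesis unfolding algebraic_over_pol by blast
  next
    case True
    define U where "U = (\<lambda>i. z ^ i) ` {..N}"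
    have cardU: "card U = Suc N" unfolding U_def using True by (simp add: card_image)
    have "U \<subseteq> span_over F P" using RP pw unfolding U_def by auto
    then have "\<not> lin_indep_over F U"
    proof (intro notI)
      assume "U \<subseteq> span_over F P" "lin_indep_over F U"
      from steinitz[OF F P this] have "card U \<le> N" unfolding N_def by simp
      with cardU show False by simp
    qed
    then obtain V c where V: "finite V" "V \<subseteq> U" "\<forall>x\<in>V. c x \<in> F" "(\<Sum>x\<in>V. c x * x) = 0"
      and nz: "\<exists>x\<in>V. c x \<noteq> 0" unfolding lin_indep_over_def by blast
    define q where "q = (\<Sum>i\<in>{..N}. monom (if z ^ i \<in> V then c (z ^ i) else 0) i)"
    have VU: "V \<subseteq> (\<lambda>i. z ^ i) ` {..N}" using V U_def by auto
    note pq = powers_poly[OF True finite_atMost VU q_def]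
    from nz obtain x where x: "x \<in> V" "c x \<noteq> 0" by blast
    then obtain i where i: "i \<le> N" "x = z ^ i" using VU by auto
    have "coeff q i \<noteq> 0" using pq(1)[of i] i x by simp
    then have "q \<noteq> 0" by auto
    moreover have "poly q z = 0" using pq(2) V(4) by simp
    moreover have "pol_over F q" unfolding pol_over_def pq(1) using V F by (auto simp: sf_0)
    ultimately show ?thesis unfolding algebraic_over_pol by blast
  qed
qed

lemma alg_inverse_poly:
  assumes F: "is_subfield F" and alg: "algebraic_over F z" and z0: "z \<noteq> 0"
  shows "\<exists>r. pol_over F r \<and> inverse z = poly r z"
proof -
  let ?P = "\<lambda>p. p \<noteq> 0 \<and> pol_over F p \<and> poly p z = 0"
  obtain p where p: "?P p" and mn: "\<And>p'. ?P p' \<Longrightarrow> degree p \<le> degree p'"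
    using ex_has_least_nat[of ?P _ degree] alg unfolding algebraic_over_pol by blast
  obtain a r where ar: "p = pCons a r" by (cases p)
  have rF: "pol_over F r" and aF: "a \<in> F" using p ar by (auto simp: pol_over_pCons_iff)
  have a0: "a \<noteq> 0"
  proof
    assume a: "a = 0"
    then have "r \<noteq> 0" using p ar by auto
    moreover have "poly r z = 0" using p ar a z0 by simp
    ultimately have "degree p \<le> degree r" using mn rF by blast
    moreover have "degree p = Suc (degree r)" using ar \<open>r \<noteq> 0\<close> by simp
    ultimately show False by simp
  qed
  have "a + z * poly r z = 0" using p ar by simp
  then have "inverse z = poly (smult (- inverse a) r) z"
    using a0 z0 by (simp add: field_simps) (metis add.commute add_eq_0_iff mult.commute)
  moreover have "pol_over F (smult (- inverse a) r)"
    by (intro pol_over_smult F rF sf_uminus sf_inverse aF)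
  ultimately show ?thesis by blast
qed

lemma minpoly_exists:
  assumes F: "is_subfield F" and alg: "algebraic_over F b"
  shows "\<exists>h. pol_over F h \<and> lead_coeff h = 1 \<and> poly h b = 0 \<and>
     (\<forall>p. pol_over F p \<and> p \<noteq> 0 \<and> poly p b = 0 \<longrightarrow> degree h \<le> degree p)"
proof -
  let ?P = "\<lambda>p. p \<noteq> 0 \<and> pol_over F p \<and> poly p b = 0"
  obtain p where p: "?P p" and mn: "\<And>p'. ?P p' \<Longrightarrow> degree p \<le> degree p'"
    using ex_has_least_nat[of ?P _ degree] alg unfolding algebraic_over_pol by blast
  define h where "h = smult (inverse (lead_coeff p)) p"
  have "lead_coeff p \<in> F" using p by (simp add: pol_over_def)
  then have "pol_over F h" unfolding h_def using p by (intro pol_over_smult F sf_inverse) auto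
  moreover have "lead_coeff h = 1" using p by (simp add: h_def)
  moreover have "poly h b = 0" using p by (simp add: h_def)
  moreover have "degree h = degree p" using p by (simp add: h_def)
  ultimately show ?thesis using mn by metis
qed

definition is_minpoly :: "'a::field set \<Rightarrow> 'a \<Rightarrow> 'a poly \<Rightarrow> bool" where
  "is_minpoly F b h \<longleftrightarrow> pol_over F h \<and> lead_coeff h = 1 \<and> poly h b = 0 \<and>
     (\<forall>p. pol_over F p \<and> p \<noteq> 0 \<and> poly p b = 0 \<longrightarrow> degree h \<le> degree p)"

lemma minpoly_obtain:
  assumes "is_subfield F" "algebraic_over F b"
  obtains h where "is_minpoly F b h"
  using minpoly_exists[OF assms] unfolding is_minpoly_def by blast

lemma minpoly_reduce:
  assumes F: "is_subfield F" and h: "is_minpoly F b h" and p: "pol_over F p"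
  shows "\<exists>r. pol_over F r \<and> poly r b = poly p b \<and> (r = 0 \<or> degree r < degree h) \<and> (\<exists>q. p = q * h + r)"
proof -
  from h have hF: "pol_over F h" "lead_coeff h = 1" "poly h b = 0" unfolding is_minpoly_def by auto
  from pol_over_divmod[OF F hF(1,2) p] obtain q r where qr: "pol_over F q" "pol_over F r" "p = q * h + r"
    "r = 0 \<or> degree r < degree h" by blast
  have "poly r b = poly p b" using qr(3) hF(3) by simp
  then show ?thesis using qr by blast
qed

lemma minpoly_dvd:
  assumes F: "is_subfield F" and h: "is_minpoly F b h" and p: "pol_over F p" and pb: "poly p b = 0"
  shows "h dvd p"
proof -
  from minpoly_reduce[OF F h p] obtain r q where r: "pol_over F r" "poly r b = poly p b"
    "r = 0 \<or> degree r < degree h" "p = q * h + r" by blast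
  have "r = 0"
  proof (rule ccontr)
    assume "r \<noteq> 0"
    then have "degree h \<le> degree r" using h r pb unfolding is_minpoly_def by auto
    with r(3) \<open>r \<noteq> 0\<close> show False by simp
  qed
  with r(4) show ?thesis by simp
qed

lemma minpoly_in_span:
  assumes F: "is_subfield F" and h: "is_minpoly F b h" and p: "pol_over F p"
  shows "poly p b \<in> span_over F ((\<lambda>i. b ^ i) ` {..<degree h})"
proof -
  from minpoly_reduce[OF F h p] obtain r where r: "pol_over F r" "poly r b = poly p b"
    "r = 0 \<or> degree r < degree h" by blast
  show ?thesis
  proof (cases "r = 0")
    case True
    then show ?thesis using r span_0 by force
  next
    case False
    have "poly r b = (\<Sum>i\<le>degree r. coeff r i * b ^ i)" by (rule poly_altdef)
    also have "\<dots> \<in> span_over F ((\<lambda>i. b ^ i) ` {..<degree h})"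
      by (rule span_lincomb[OF F]) (use r False in \<open>auto simp: pol_over_def intro!: span_base[OF F]\<close>)
    finally show ?thesis using r by simp
  qed
qed

definition polys_at :: "'a::field set \<Rightarrow> 'a \<Rightarrow> 'a set" where
  "polys_at F b = {poly p b | p. pol_over F p}"

lemma polys_atI: "pol_over F p \<Longrightarrow> x = poly p b \<Longrightarrow> x \<in> polys_at F b"
  unfolding polys_at_def by blast

lemma polys_atE: "x \<in> polys_at F b \<Longrightarrow> (\<And>p. pol_over F p \<Longrightarrow> x = poly p b \<Longrightarrow> P) \<Longrightarrow> P"
  unfolding polys_at_def by blast

lemma polys_at_closed:
  assumes F: "is_subfield F"
  shows "x \<in> polys_at F b \<Longrightarrow> y \<in> polys_at F b \<Longrightarrow> x + y \<in> polys_at F b"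
    and "x \<in> polys_at F b \<Longrightarrow> y \<in> polys_at F b \<Longrightarrow> x * y \<in> polys_at F b"
    and "x \<in> polys_at F b \<Longrightarrow> - x \<in> polys_at F b"
    and "c \<in> F \<Longrightarrow> c \<in> polys_at F b"
    and "b \<in> polys_at F b"
proof -
  show "x \<in> polys_at F b \<Longrightarrow> y \<in> polys_at F b \<Longrightarrow> x + y \<in> polys_at F b"
    by (elim polys_atE, rule polys_atI[OF pol_over_add[OF F]]) auto
  show "x \<in> polys_at F b \<Longrightarrow> y \<in> polys_at F b \<Longrightarrow> x * y \<in> polys_at F b"
    by (elim polys_atE, rule polys_atI[OF pol_over_mult[OF F]]) auto
  show "x \<in> polys_at F b \<Longrightarrow> - x \<in> polys_at F b"
    by (elim polys_atE, rule polys_atI[OF pol_over_uminus[OF F]]) auto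
  show "c \<in> F \<Longrightarrow> c \<in> polys_at F b"
    by (rule polys_atI[OF pol_over_const[OF F]]) auto
  have "pol_over F [:0, 1:]" using F by (intro pol_over_pCons pol_over_const sf_0 sf_1)
  then show "b \<in> polys_at F b" by (rule polys_atI) simp
qed

lemma simple_ext:
  assumes F: "is_subfield F" and alg: "algebraic_over F b" and h: "is_minpoly F b h"
  shows "adjoin F {b} = polys_at F b"
    and "adjoin F {b} = span_over F ((\<lambda>i. b ^ i) ` {..<degree h})"
proof -
  let ?R = "polys_at F b"
  let ?P = "(\<lambda>i. b ^ i) ` {..<degree h}"
  have RP: "?R \<subseteq> span_over F ?P"
    unfolding polys_at_def using minpoly_in_span[OF F h] by auto
  note cl = polys_at_closed[OF F]
  have Rsf: "is_subfield ?R"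
    unfolding is_subfield_def
  proof (intro conjI ballI)
    show "0 \<in> ?R" "1 \<in> ?R" using cl(4)[OF sf_0[OF F]] cl(4)[OF sf_1[OF F]] by auto
    fix x y assume "x \<in> ?R" "y \<in> ?R"
    then show "x + y \<in> ?R" "x * y \<in> ?R" using cl by auto
  next
    fix x assume x: "x \<in> ?R"
    then show "- x \<in> ?R" using cl by auto
    show "inverse x \<in> ?R"
    proof (cases "x = 0")
      case True then show ?thesis using cl(4) F by (simp add: sf_0)
    next
      case False
      have "algebraic_over F x"
        by (rule fin_alg_algebraic[OF F _ RP _ _ x]) (use cl cl(4)[OF sf_1[OF F]] in auto)
      from alg_inverse_poly[OF F this False] obtain r where r: "pol_over F r" "inverse x = poly r x" by blast
      have "poly r x \<in> ?R"
        by (rule poly_in_ring[of F ?R]) (use cl cl(4)[OF sf_0[OF F]] r x in auto)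
      then show ?thesis using r by simp
    qed
  qed
  have "adjoin F {b} \<subseteq> ?R" by (rule adjoin_min[OF Rsf]) (use cl in auto)
  moreover have "?R \<subseteq> adjoin F {b}"
    unfolding polys_at_def using poly_in_sf[OF adjoin_sf adjoin_base] adjoin_gen by blast
  ultimately show 1: "adjoin F {b} = ?R" by blast
  have "?P \<subseteq> adjoin F {b}" using adjoin_sf[THEN sf_power] adjoin_gen by blast
  then have "span_over F ?P \<subseteq> adjoin F {b}" by (intro span_in_sf adjoin_sf adjoin_base)
  with RP 1 show "adjoin F {b} = span_over F ?P" by blast
qed

lemma simple_ext_finite:
  assumes F: "is_subfield F" and alg: "algebraic_over F b"
  shows "\<exists>P. finite P \<and> P \<subseteq> adjoin F {b} \<and> adjoin F {b} = span_over F P"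
proof -
  obtain h where h: "is_minpoly F b h" using minpoly_obtain[OF F alg] by blast
  note s = simple_ext[OF F alg h]
  let ?P = "(\<lambda>i. b ^ i) ` {..<degree h}"
  have "?P \<subseteq> adjoin F {b}" using s(2) span_base_subset[OF F, of ?P] by blast
  moreover have "finite ?P" by simp
  ultimately show ?thesis using s(2) by blast
qed

lemma span_tower:
  assumes F: "is_subfield F" and M: "is_subfield M" and FM: "F \<subseteq> M" and MP: "M \<subseteq> span_over F P"
  shows "span_over M X \<subseteq> span_over F ((\<lambda>(p, x). p * x) ` (P \<times> X))"
proof
  fix v assume v: "v \<in> span_over M X"
  define Q where "Q = span_over F ((\<lambda>(p, x). p * x) ` (P \<times> X))"
  have step: "a * x \<in> Q" if a: "a \<in> M" and x: "x \<in> X" for a x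
  proof -
    from a MP have "a \<in> span_over F P" by blast
    then obtain T c where T: "finite T" "T \<subseteq> P" "\<forall>t\<in>T. c t \<in> F" and av: "a = (\<Sum>t\<in>T. c t * t)"
      unfolding span_over_def by blast
    have "a * x = (\<Sum>t\<in>T. c t * (t * x))" by (simp add: av sum_distrib_right mult.assoc)
    also have "\<dots> \<in> Q" unfolding Q_def
    proof (rule span_lincomb[OF F])
      fix t assume t: "t \<in> T"
      show "c t \<in> F" using T t by blast
      have "t * x \<in> (\<lambda>(p, x). p * x) ` (P \<times> X)" using T t x by force
      then show "t * x \<in> span_over F ((\<lambda>(p, x). p * x) ` (P \<times> X))" by (rule span_base[OF F])
    qed
    finally show ?thesis .
  qed
  have "v \<in> Q"
    by (rule span_induct[OF v]) (auto simp: Q_def intro: span_0 span_add[OF F] step[unfolded Q_def])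
  then show "v \<in> span_over F ((\<lambda>(p, x). p * x) ` (P \<times> X))" by (simp add: Q_def)
qed

lemma fspan_step:
  assumes F: "is_subfield F" and M: "is_subfield M" and FM: "F \<subseteq> M" and P: "finite P" and MP: "M \<subseteq> span_over F P"
    and alg: "algebraic_over M b"
  shows "\<exists>Q. finite Q \<and> adjoin M {b} \<subseteq> span_over F Q"
proof -
  from simple_ext_finite[OF M alg] obtain X where X: "finite X" "adjoin M {b} = span_over M X" by blast
  have "adjoin M {b} \<subseteq> span_over F ((\<lambda>(p, x). p * x) ` (P \<times> X))"
    unfolding X(2) by (rule span_tower[OF F M FM MP])
  moreover have "finite ((\<lambda>(p, x). p * x) ` (P \<times> X))" using P X(1) by simp
  ultimately show ?thesis by blast
qed

lemma alg_closure_sf: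
  assumes F: "is_subfield F"
  shows "is_subfield (alg_closure_in F)" and "F \<subseteq> alg_closure_in F"
proof -
  show "F \<subseteq> alg_closure_in F" unfolding alg_closure_in_def using alg_of_mem[OF F] by blast
  have base: "\<exists>P. finite P \<and> F \<subseteq> span_over F P"
    by (rule exI[of _ "{1}"]) (use span_field_in[OF F] in auto)
  have two: "algebraic_over F (x + y) \<and> algebraic_over F (x * y) \<and> algebraic_over F (- x) \<and> algebraic_over F (inverse x)"
    if x: "algebraic_over F x" and y: "algebraic_over F y" for x y
  proof -
    from simple_ext_finite[OF F x] obtain P1 where P1: "finite P1" "adjoin F {x} = span_over F P1" by blast
    let ?M = "adjoin F {x}"
    have yM: "algebraic_over ?M y" by (rule alg_mono[OF adjoin_base y])
    from fspan_step[OF F adjoin_sf adjoin_base P1(1) _ yM] P1 obtain Q where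
      Q: "finite Q" "adjoin ?M {y} \<subseteq> span_over F Q" by auto
    let ?N = "adjoin ?M {y}"
    have xN: "x \<in> ?N" using adjoin_base[of ?M "{y}"] adjoin_gen[of "{x}" F] by blast
    have yN: "y \<in> ?N" using adjoin_gen by blast
    have N: "is_subfield ?N" by (rule adjoin_sf)
    have "z \<in> ?N \<Longrightarrow> algebraic_over F z" for z
      by (rule fin_alg_algebraic[OF F Q(1) Q(2)]) (use N sf_1 sf_mult in auto)
    then show ?thesis using N xN yN by (auto intro: sf_add sf_mult sf_uminus sf_inverse)
  qed
  show "is_subfield (alg_closure_in F)"
    unfolding is_subfield_def alg_closure_in_def
    using two alg_of_mem[OF F] F by (auto intro: sf_0 sf_1)
qed

lemma fspan_adjoin_finite:
  assumes F: "is_subfield F" and C: "finite C" and alg: "\<And>c. c \<in> C \<Longrightarrow> algebraic_over F c"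
  shows "\<exists>P. finite P \<and> adjoin F C \<subseteq> span_over F P"
  using C alg
proof (induction C rule: finite_induct)
  case empty
  then show ?case using adjoin_empty[OF F] span_field_in[OF F, of "{1}"] by (intro exI[of _ "{1}"]) auto
next
  case (insert c C)
  then obtain P where P: "finite P" "adjoin F C \<subseteq> span_over F P" by blast
  have "algebraic_over (adjoin F C) c" using insert alg_mono[OF adjoin_base] by blast
  from fspan_step[OF F adjoin_sf adjoin_base P this] obtain Q where "finite Q" "adjoin (adjoin F C) {c} \<subseteq> span_over F Q"
    by blast
  moreover have "adjoin (adjoin F C) {c} = adjoin F (insert c C)" by (simp add: adjoin_adjoin)
  ultimately show ?case by auto
qed

lemma alg_trans:
  assumes F: "is_subfield F" and y: "algebraic_over (alg_closure_in F) y"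
  shows "algebraic_over F y"
proof -
  from y obtain q where q: "q \<noteq> 0" "pol_over (alg_closure_in F) q" "poly q y = 0"
    unfolding algebraic_over_pol by blast
  define C where "C = (\<lambda>i. coeff q i) ` {..degree q}"
  have C: "finite C" unfolding C_def by simp
  have Calg: "c \<in> C \<Longrightarrow> algebraic_over F c" for c
    using q(2) unfolding C_def pol_over_def alg_closure_in_def by auto
  from fspan_adjoin_finite[OF F C Calg] obtain P where P: "finite P" "adjoin F C \<subseteq> span_over F P" by blast
  let ?M = "adjoin F C"
  have "pol_over ?M q" unfolding pol_over_def
  proof
    fix i show "coeff q i \<in> ?M"
    proof (cases "i \<le> degree q")
      case True then have "coeff q i \<in> C" unfolding C_def by auto
      then show ?thesis using adjoin_gen by blast
    next
      case False then show ?thesis by (simp add: coeff_eq_0 adjoin_sf[THEN sf_0])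
    qed
  qed
  then have "algebraic_over ?M y" using q unfolding algebraic_over_pol by blast
  from fspan_step[OF F adjoin_sf adjoin_base P this] obtain Q where Q: "finite Q" "adjoin ?M {y} \<subseteq> span_over F Q"
    by blast
  show ?thesis
    by (rule fin_alg_algebraic[OF F Q(1) Q(2)])
      (use adjoin_sf[THEN sf_1] adjoin_sf[THEN sf_mult] adjoin_gen[of "{y}" ?M] in auto)
qed

lemma finite_ext_alg:
  assumes F: "is_subfield F" and L: "is_subfield L" and fe: "finite_ext F L"
  shows "L \<subseteq> alg_closure_in F"
proof
  fix x assume x: "x \<in> L"
  from fe obtain S where S: "finite S" "S \<subseteq> L" "span_over F S = L" unfolding finite_ext_def by blast
  have "algebraic_over F x"
    by (rule fin_alg_algebraic[OF F S(1) _ _ _ x]) (use S L sf_1 sf_mult in auto)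
  then show "x \<in> alg_closure_in F" by (simp add: alg_closure_in_def)
qed



lemma split_monic:
  fixes h :: "'a::field poly"
  assumes ac: "\<forall>p::'a poly. degree p > 0 \<longrightarrow> (\<exists>x. poly p x = 0)"
  shows "lead_coeff h = 1 \<Longrightarrow> \<exists>rs. h = prod_list (map (\<lambda>r. [:-r, 1:]) rs) \<and> (\<forall>r\<in>set rs. poly h r = 0)"
proof (induction "degree h" arbitrary: h)
  case 0
  have d0: "degree h = 0" using 0 by simp
  have "[:coeff h 0:] = h" by (rule degree_0_id[OF d0])
  moreover have "coeff h 0 = 1" using 0 d0 by simp
  ultimately have "h = 1" by (metis one_pCons)
  then show ?case by (intro exI[of _ "[]"]) simp
next
  case (Suc m)
  then obtain x where x: "poly h x = 0" using ac by (metis zero_less_Suc)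
  then have "[:-x, 1:] dvd h" by (simp add: poly_eq_0_iff_dvd)
  then obtain q where q: "h = [:-x, 1:] * q" by (elim dvdE)
  have h0: "h \<noteq> 0" using Suc(3) by auto
  then have q0: "q \<noteq> 0" using q by auto
  have "lead_coeff h = lead_coeff [:-x, 1:] * lead_coeff q" unfolding q by (rule lead_coeff_mult)
  then have "lead_coeff h = lead_coeff q" by simp
  then have lq: "lead_coeff q = 1" using Suc(3) by simp
  have "degree h = degree [:-x, 1:] + degree q" unfolding q by (rule degree_mult_eq) (use q0 in auto)
  then have "degree h = Suc (degree q)" by simp
  then have "m = degree q" using Suc(2) by simp
  from Suc(1)[OF this lq] obtain rs where rs: "q = prod_list (map (\<lambda>r. [:-r, 1:]) rs)" "\<forall>r\<in>set rs. poly q r = 0"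
    by blast
  show ?case
    by (rule exI[of _ "x # rs"]) (use q rs x in auto)
qed

lemma pol_over_prod_linear:
  assumes A: "is_subfield A"
  shows "set rs \<subseteq> A \<Longrightarrow> pol_over A (prod_list (map (\<lambda>r. [:-r, 1:]) rs))"
proof (induction rs)
  case Nil
  then show ?case using pol_over_const[OF A sf_1[OF A]] by (simp add: one_pCons)
next
  case (Cons r rs)
  have "pol_over A [:-r, 1:]"
    using Cons.prems A by (intro pol_over_pCons pol_over_const sf_uminus sf_1) auto
  moreover have "pol_over A (prod_list (map (\<lambda>r. [:-r, 1:]) rs))" using Cons by simp
  ultimately have "pol_over A ([:-r, 1:] * prod_list (map (\<lambda>r. [:-r, 1:]) rs))"
    by (rule pol_over_mult[OF A])
  then show ?case by simp
qed

lemma minpoly_powers_indep: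
  assumes F: "is_subfield F" and h: "is_minpoly F b h"
  shows "inj_on (\<lambda>i. b ^ i) {..<degree h}" and "lin_indep_over F ((\<lambda>i. b ^ i) ` {..<degree h})"
proof -
  have mn: "degree h \<le> degree p" if "pol_over F p" "p \<noteq> 0" "poly p b = 0" for p
    using h that unfolding is_minpoly_def by blast
  show inj: "inj_on (\<lambda>i. b ^ i) {..<degree h}"
  proof (rule inj_onI, rule ccontr)
    fix i j assume ij: "i \<in> {..<degree h}" "j \<in> {..<degree h}" "b ^ i = b ^ j" "i \<noteq> j"
    define a c where "a = min i j" and "c = max i j"
    have ac: "a < c" "b ^ a = b ^ c" "c < degree h"
      using ij unfolding a_def c_def by (cases "i < j"; simp add: min_def max_def)+
    define q where "q = monom (1::'a) c - monom 1 a"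
    have "coeff q c = 1" using ac by (simp add: q_def coeff_monom)
    then have q0: "q \<noteq> 0" by auto
    have "poly q b = 0" using ac by (simp add: q_def poly_monom)
    moreover have "pol_over F q" unfolding q_def by (intro pol_over_diff pol_over_monom F sf_1)
    ultimately have "degree h \<le> degree q" using mn q0 by blast
    moreover have "degree q \<le> c" unfolding q_def
      by (rule degree_le) (use ac in \<open>auto simp: coeff_monom\<close>)
    ultimately show False using ac by simp
  qed
  show "lin_indep_over F ((\<lambda>i. b ^ i) ` {..<degree h})"
    unfolding lin_indep_over_def
  proof (intro allI impI)
    fix V c
    assume H: "finite V \<and> V \<subseteq> (\<lambda>i. b ^ i) ` {..<degree h} \<and> (\<forall>x\<in>V. c x \<in> F) \<and> (\<Sum>x\<in>V. c x * x) = 0"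
    define q where "q = (\<Sum>i\<in>{..<degree h}. monom (if b ^ i \<in> V then c (b ^ i) else 0) i)"
    note pq = powers_poly[OF inj finite_lessThan _ q_def]
    have co: "coeff q j = (if j \<in> {..<degree h} \<and> b ^ j \<in> V then c (b ^ j) else 0)" for j
      using pq(1) H by blast
    have pb: "poly q b = 0" using pq(2) H by simp
    have qF: "pol_over F q" unfolding pol_over_def co using H F by (auto simp: sf_0)
    have "q = 0"
    proof (rule ccontr)
      assume "q \<noteq> 0"
      then have "degree h \<le> degree q" using mn qF pb by blast
      moreover have "q \<noteq> 0 \<Longrightarrow> degree q < degree h"
      proof -
        assume "q \<noteq> 0"
        have "coeff q (degree q) \<noteq> 0" using \<open>q \<noteq> 0\<close> by simp
        then show "degree q < degree h" using co[of "degree q"] by (auto split: if_splits)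
      qed
      ultimately show False using \<open>q \<noteq> 0\<close> by simp
    qed
    show "\<forall>x\<in>V. c x = 0"
    proof
      fix x assume x: "x \<in> V"
      then obtain i where i: "i < degree h" "x = b ^ i" using H by auto
      have "coeff q i = c x" using co[of i] i x by simp
      then show "c x = 0" using \<open>q = 0\<close> by simp
    qed
  qed
qed

section \<open>A simple algebraic step has essential dimension at most d\<close>

lemma step_ed:
  assumes ac: "\<forall>p::'a poly. degree p > 0 \<longrightarrow> (\<exists>x. poly p x = 0)"
    and F: "is_subfield F" and k: "is_subfield k" and kF: "k \<subseteq> F"
    and SF: "S \<subseteq> F" and fS: "finite S" and indS: "alg_indep k S" and cS: "card S \<le> d"
    and alg: "algebraic_over (adjoin k S) (b::'a::field)"
  shows "is_subfield (adjoin F {b}) \<and> finite_ext F (adjoin F {b}) \<and> ed_le k F (adjoin F {b}) d"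
proof -
  define kS where "kS = adjoin k S"
  have kSsf: "is_subfield kS" unfolding kS_def by (rule adjoin_sf)
  have kSF: "kS \<subseteq> F" unfolding kS_def by (rule adjoin_min[OF F kF SF])
  define A where "A = alg_closure_in kS"
  have Asf: "is_subfield A" unfolding A_def by (rule alg_closure_sf(1)[OF kSsf])
  have kSA: "kS \<subseteq> A" unfolding A_def by (rule alg_closure_sf(2)[OF kSsf])
  have bF: "algebraic_over F b" using alg_mono[OF kSF] alg unfolding kS_def by blast
  obtain h where h: "is_minpoly F b h" using minpoly_obtain[OF F bF] by blast
  have hF: "pol_over F h" and lh: "lead_coeff h = 1" and hb: "poly h b = 0"
    using h unfolding is_minpoly_def by auto
  from alg obtain g where g: "g \<noteq> 0" "pol_over kS g" "poly g b = 0"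
    unfolding algebraic_over_pol kS_def by blast
  have "pol_over F g" using g(2) kSF by (rule pol_over_mono[rotated])
  then have hg: "h dvd g" using minpoly_dvd[OF F h _ g(3)] by blast
  from split_monic[OF ac lh] obtain rs where rs: "h = prod_list (map (\<lambda>r. [:-r, 1:]) rs)"
    "\<forall>r\<in>set rs. poly h r = 0" by blast
  have "set rs \<subseteq> A"
  proof
    fix r assume r: "r \<in> set rs"
    from hg obtain w where w: "g = h * w" by (elim dvdE)
    have "poly h r = 0" using rs(2) r by blast
    then have "poly g r = 0" unfolding w by simp
    then have "algebraic_over kS r" using g unfolding algebraic_over_pol by blast
    then show "r \<in> A" unfolding A_def alg_closure_in_def by simp
  qed
  then have hA: "pol_over A h" using rs(1) pol_over_prod_linear[OF Asf] by simp
  define K1 where "K1 = F \<inter> A"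
  have K1sf: "is_subfield K1" unfolding K1_def by (rule sf_Int[OF F Asf])
  have K1F: "K1 \<subseteq> F" unfolding K1_def by blast
  have kK1: "k \<subseteq> K1" unfolding K1_def using kF kSA adjoin_base[of k S] kS_def by blast
  have hK1: "pol_over K1 h" using hF hA unfolding K1_def pol_over_def by blast
  have hmin1: "is_minpoly K1 b h"
    unfolding is_minpoly_def
  proof (intro conjI allI impI)
    fix p assume "pol_over K1 p \<and> p \<noteq> 0 \<and> poly p b = 0"
    then have "pol_over F p" "p \<noteq> 0" "poly p b = 0" using pol_over_mono[OF K1F] by auto
    then show "degree h \<le> degree p" using h unfolding is_minpoly_def by blast
  qed (use hK1 lh hb in auto)
  have "h \<noteq> 0" using lh by auto
  then have bK1: "algebraic_over K1 b" using hK1 hb unfolding algebraic_over_pol by blast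
  define P where "P = (\<lambda>i. b ^ i) ` {..<degree h}"
  define B where "B = polys_at K1 b"
  note sK1 = simple_ext[OF K1sf bK1 hmin1, folded P_def B_def]
  note sF = simple_ext[OF F bF h, folded P_def]
  note indP = minpoly_powers_indep[OF F h, folded P_def]
  have fP: "finite P" unfolding P_def by simp
  have cardP: "card P = degree h" unfolding P_def using indP(1) by (simp add: card_image)
  have BF: "B \<subseteq> adjoin F {b}"
  proof
    fix x assume "x \<in> B"
    then obtain p where "pol_over K1 p" "x = poly p b" unfolding B_def by (elim polys_atE)
    then have "x \<in> polys_at F b" using pol_over_mono[OF K1F] by (intro polys_atI) auto
    then show "x \<in> adjoin F {b}" using sF(1) by simp
  qed
  have PB: "P \<subseteq> B" using sK1 span_base_subset[OF K1sf, of P] by blast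
  have Bspan: "B = span_over K1 P" using sK1 by simp
  have "descends F (adjoin F {b}) K1"
    unfolding descends_def
  proof (rule exI[of _ B], intro conjI)
    show "K1 \<subseteq> B" unfolding B_def using polys_at_closed(4)[OF K1sf] by blast
    show "B \<subseteq> adjoin F {b}" by (rule BF)
    show "\<forall>x\<in>B. \<forall>y\<in>B. x + y \<in> B \<and> x * y \<in> B \<and> - x \<in> B"
      unfolding B_def using polys_at_closed[OF K1sf] by blast
    show "span_over F B = adjoin F {b}"
    proof (rule subset_antisym)
      show "span_over F B \<subseteq> adjoin F {b}" by (rule span_in_sf[OF adjoin_sf adjoin_base BF])
      show "adjoin F {b} \<subseteq> span_over F B" unfolding sF(2) by (rule span_mono[OF PB])
    qed
    show "\<forall>T. T \<subseteq> B \<and> lin_indep_over K1 T \<longrightarrow> lin_indep_over F T"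
    proof (intro allI impI, elim conjE)
      fix T assume TB: "T \<subseteq> B" and indT: "lin_indep_over K1 T"
      have XP: "T \<union> P \<subseteq> span_over K1 P" using TB Bspan span_base_subset[OF K1sf, of P] by blast
      have bound: "finite V \<and> card V \<le> card P" if "V \<subseteq> T \<union> P" "lin_indep_over K1 V" for V
        using steinitz[OF K1sf fP _ that(2)] that(1) XP by blast
      from indep_extend[OF K1sf _ indT bound, of "T \<union> P"] obtain T' where
        T': "T \<subseteq> T'" "T' \<subseteq> T \<union> P" "lin_indep_over K1 T'" "finite T'" "T \<union> P \<subseteq> span_over K1 T'"
        by blast
      have c1: "card T' \<le> card P" using bound[OF T'(2,3)] by simp
      have PT': "P \<subseteq> span_over F T'" using T'(5) span_field_mono[OF K1F] by blast
      have c2: "card P \<le> card T'" using steinitz[OF F T'(4) PT' indP(2)] by simp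
      have "lin_indep_over F T'"
      proof (rule ccontr)
        assume "\<not> lin_indep_over F T'"
        from dependent_in_span[OF F this] obtain t where t: "t \<in> T'" "t \<in> span_over F (T' - {t})" by blast
        have "T' \<subseteq> span_over F (T' - {t})"
        proof
          fix x assume x: "x \<in> T'"
          show "x \<in> span_over F (T' - {t})"
          proof (cases "x = t")
            case True then show ?thesis using t by simp
          next
            case False then show ?thesis using x by (intro span_base[OF F]) auto
          qed
        qed
        then have "span_over F T' \<subseteq> span_over F (T' - {t})" by (rule span_trans[OF F])
        with PT' have "P \<subseteq> span_over F (T' - {t})" by blast
        from steinitz[OF F _ this indP(2)] T'(4) have "card P \<le> card (T' - {t})" by simp
        also have "\<dots> = card T' - 1" using t(1) T'(4) by simp
        moreover have "card T' > 0" using t(1) T'(4) by (auto simp: card_gt_0_iff)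
        ultimately show False using c1 c2 by linarith
      qed
      then show "lin_indep_over F T" using T'(1) by (rule indep_subset)
    qed
  qed
  moreover have "trdeg_le k K1 d"
    unfolding trdeg_le_def
  proof (rule exI[of _ S], intro conjI)
    show "S \<subseteq> K1" unfolding K1_def using SF kSA adjoin_gen[of S k] kS_def by blast
    show "alg_indep k S" by (rule indS)
    show "\<forall>x\<in>K1. algebraic_over (adjoin k S) x"
      unfolding K1_def A_def alg_closure_in_def kS_def by blast
  qed (use fS cS in auto)
  ultimately have "ed_le k F (adjoin F {b}) d"
    unfolding ed_le_def using K1sf kK1 K1F by blast
  moreover have "finite_ext F (adjoin F {b})"
    unfolding finite_ext_def
  proof (intro conjI)
    show "F \<subseteq> adjoin F {b}" by (rule adjoin_base)
    have "P \<subseteq> adjoin F {b}" using sF(2) span_base_subset[OF F, of P] by blast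
    then show "\<exists>S. finite S \<and> S \<subseteq> adjoin F {b} \<and> span_over F S = adjoin F {b}"
      using fP sF(2) by blast
  qed
  ultimately show ?thesis using adjoin_sf by blast
qed



section \<open>Simple towers\<close>

fun tw :: "'a::field set \<Rightarrow> ('a \<times> 'a set) list \<Rightarrow> 'a set" where
  "tw F [] = F"
| "tw F ((b, S) # xs) = tw (adjoin F {b}) xs"

fun valid :: "'a::field set \<Rightarrow> nat \<Rightarrow> 'a set \<Rightarrow> ('a \<times> 'a set) list \<Rightarrow> bool" where
  "valid k d F [] = True"
| "valid k d F ((b, S) # xs) = (S \<subseteq> F \<and> finite S \<and> card S \<le> d \<and> alg_indep k S \<and>
      algebraic_over (adjoin k S) b \<and> valid k d (adjoin F {b}) xs)"

lemma tw_base: "F \<subseteq> tw F xs"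
  by (induction xs arbitrary: F) (auto, meson adjoin_base subset_iff)

lemma tw_sf: "is_subfield F \<Longrightarrow> is_subfield (tw F xs)"
proof (induction xs arbitrary: F)
  case Nil then show ?case by simp
next
  case (Cons x xs) then show ?case by (cases x) (simp add: adjoin_sf)
qed

lemma tw_mono: "F \<subseteq> F' \<Longrightarrow> tw F xs \<subseteq> tw F' xs"
proof (induction xs arbitrary: F F')
  case Nil then show ?case by simp
next
  case (Cons x xs)
  obtain b S where x: "x = (b, S)" by (cases x)
  have "adjoin F {b} \<subseteq> adjoin F' {b}" using Cons.prems by (rule adjoin_mono) simp
  then show ?case using Cons.IH x by simp
qed

lemma valid_mono: "F \<subseteq> F' \<Longrightarrow> valid k d F xs \<Longrightarrow> valid k d F' xs"
proof (induction xs arbitrary: F F')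
  case Nil then show ?case by simp
next
  case (Cons x xs)
  obtain b S where x: "x = (b, S)" by (cases x)
  have "adjoin F {b} \<subseteq> adjoin F' {b}" using Cons.prems(1) by (rule adjoin_mono) simp
  then show ?case using Cons x by auto
qed

lemma valid_d_mono: "d \<le> n \<Longrightarrow> valid k d F xs \<Longrightarrow> valid k n F xs"
proof (induction xs arbitrary: F)
  case Nil then show ?case by simp
next
  case (Cons x xs) then show ?case by (cases x) auto
qed

lemma tw_append: "tw F (xs @ ys) = tw (tw F xs) ys"
proof (induction xs arbitrary: F)
  case Nil then show ?case by simp
next
  case (Cons x xs) then show ?case by (cases x) simp
qed

lemma valid_append: "valid k d F (xs @ ys) \<longleftrightarrow> valid k d F xs \<and> valid k d (tw F xs) ys"
proof (induction xs arbitrary: F)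
  case Nil then show ?case by simp
next
  case (Cons x xs) then show ?case by (cases x) auto
qed

lemma tw_adjoin: "is_subfield F \<Longrightarrow> tw F xs = adjoin F (fst ` set xs)"
proof (induction xs arbitrary: F)
  case Nil then show ?case by (simp add: adjoin_empty)
next
  case (Cons x xs)
  obtain b S where x: "x = (b, S)" by (cases x)
  have "tw F (x # xs) = adjoin (adjoin F {b}) (fst ` set xs)" using Cons.IH[OF adjoin_sf] x by simp
  also have "\<dots> = adjoin F ({b} \<union> fst ` set xs)" by (rule adjoin_adjoin)
  finally show ?case using x by simp
qed

lemma fspan_finite_ext:
  assumes F: "is_subfield F" and L: "is_subfield L" and FL: "F \<subseteq> L" and P: "finite P" and LP: "L \<subseteq> span_over F P"
  shows "finite_ext F L"
proof -
  have e: "lin_indep_over F {}" unfolding lin_indep_over_def by simp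
  have bound: "finite V \<and> card V \<le> card P" if "V \<subseteq> L" "lin_indep_over F V" for V
    using steinitz[OF F P _ that(2)] that(1) LP by blast
  from indep_extend[OF F _ e bound, of L] obtain T where T: "T \<subseteq> L" "finite T" "L \<subseteq> span_over F T"
    by blast
  have "span_over F T \<subseteq> L" by (rule span_in_sf[OF L FL T(1)])
  then show ?thesis unfolding finite_ext_def using FL T by blast
qed

lemma tw_fspan:
  assumes F: "is_subfield F" and kF: "k \<subseteq> F"
  shows "is_subfield M \<Longrightarrow> F \<subseteq> M \<Longrightarrow> finite P \<Longrightarrow> M \<subseteq> span_over F P \<Longrightarrow> valid k d M xs
     \<Longrightarrow> \<exists>Q. finite Q \<and> tw M xs \<subseteq> span_over F Q"
proof (induction xs arbitrary: M P)
  case Nil then show ?case by auto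
next
  case (Cons x xs)
  obtain b S where x: "x = (b, S)" by (cases x)
  have v: "S \<subseteq> M" "algebraic_over (adjoin k S) b" "valid k d (adjoin M {b}) xs" using Cons.prems x by auto
  have "adjoin k S \<subseteq> M" by (rule adjoin_min[OF Cons.prems(1)]) (use kF Cons.prems(2) v(1) in auto)
  then have "algebraic_over M b" using v(2) alg_mono by blast
  from fspan_step[OF F Cons.prems(1,2,3,4) this] obtain Q where Q: "finite Q" "adjoin M {b} \<subseteq> span_over F Q"
    by blast
  have "F \<subseteq> adjoin M {b}" using Cons.prems(2) adjoin_base by blast
  from Cons.IH[OF adjoin_sf this Q v(3)] show ?case using x by simp
qed

lemma tw_finite_ext:
  assumes F: "is_subfield F" and kF: "k \<subseteq> F" and v: "valid k d F xs"
  shows "finite_ext F (tw F xs)" and "tw F xs \<subseteq> alg_closure_in F"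
proof -
  have "F \<subseteq> span_over F {1}" by (rule span_field_in[OF F]) simp
  from tw_fspan[OF F kF F order_refl _ this v] obtain Q where Q: "finite Q" "tw F xs \<subseteq> span_over F Q" by auto
  show fe: "finite_ext F (tw F xs)" by (rule fspan_finite_ext[OF F tw_sf[OF F] tw_base Q])
  show "tw F xs \<subseteq> alg_closure_in F" by (rule finite_ext_alg[OF F tw_sf[OF F] fe])
qed

lemma valid_lev:
  assumes ac: "\<forall>p::'a poly. degree p > 0 \<longrightarrow> (\<exists>x. poly p x = 0)"
    and F: "is_subfield F" and k: "is_subfield k" and kF: "k \<subseteq> F" and v: "valid k d F (xs :: ('a::field \<times> 'a set) list)"
  shows "lev_le k F (tw F xs) d"
  unfolding lev_le_def
proof (intro exI[of _ "length xs"] exI[of _ "\<lambda>i. tw F (take i xs)"] conjI allI impI)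
  show "tw F (take 0 xs) = F" by simp
  show "tw F xs \<subseteq> tw F (take (length xs) xs)" by simp
  fix i assume i: "i < length xs"
  obtain b S where bS: "xs ! i = (b, S)" by (cases "xs ! i")
  have split: "xs = take i xs @ [(b, S)] @ drop (Suc i) xs"
    using id_take_nth_drop[OF i] bS by simp
  let ?G = "tw F (take i xs)"
  have eq: "tw F (take (Suc i) xs) = adjoin ?G {b}"
    using take_Suc_conv_app_nth[OF i] bS by (simp add: tw_append)
  have "valid k d F (take i xs @ [(b, S)] @ drop (Suc i) xs)" using v split by simp
  then have vv: "valid k d ?G ((b, S) # drop (Suc i) xs)" by (simp add: valid_append)
  have G: "is_subfield ?G" by (rule tw_sf[OF F])
  have kG: "k \<subseteq> ?G" using kF tw_base by blast
  from vv have "S \<subseteq> ?G" "finite S" "alg_indep k S" "card S \<le> d" "algebraic_over (adjoin k S) b" by auto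
  from step_ed[OF ac G k kG this(1,2,3,4,5)]
  show "is_subfield (tw F (take (Suc i) xs))" "finite_ext (tw F (take i xs)) (tw F (take (Suc i) xs))"
    "ed_le k (tw F (take i xs)) (tw F (take (Suc i) xs)) d"
    unfolding eq by auto
qed

lemma valid_map:
  assumes "finite S" "card S \<le> d" "alg_indep k S" "\<forall>t\<in>set ts. algebraic_over (adjoin k S) t"
  shows "S \<subseteq> G \<Longrightarrow> valid k d G (map (\<lambda>t. (t, S)) ts)"
  using assms(4)
proof (induction ts arbitrary: G)
  case Nil then show ?case by simp
next
  case (Cons t ts)
  have "S \<subseteq> adjoin G {t}" using Cons.prems(1) adjoin_base by blast
  then show ?case using Cons assms by simp
qed

lemma tw_map_fst: "is_subfield G \<Longrightarrow> tw G (map (\<lambda>t. (t, S)) ts) = adjoin G (set ts)"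
  using tw_adjoin[of G "map (\<lambda>t. (t, S)) ts"] by (simp add: image_image)

lemma ed_step_valid:
  assumes G: "is_subfield G" and k: "is_subfield k" and fe: "finite_ext G A" and ed: "ed_le k G A d"
  shows "\<exists>ys. valid k d G ys \<and> A \<subseteq> tw G ys"
proof -
  from ed obtain K0 where K0: "is_subfield K0" "k \<subseteq> K0" "K0 \<subseteq> G" "descends G A K0" "trdeg_le k K0 d"
    unfolding ed_le_def by blast
  from K0(4) obtain B where B: "K0 \<subseteq> B" "B \<subseteq> A" "\<forall>x\<in>B. \<forall>y\<in>B. x + y \<in> B \<and> x * y \<in> B \<and> - x \<in> B"
    "span_over G B = A" "\<forall>T. T \<subseteq> B \<and> lin_indep_over K0 T \<longrightarrow> lin_indep_over G T"
    unfolding descends_def by blast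
  from K0(5) obtain S where S: "S \<subseteq> K0" "alg_indep k S" "\<forall>x\<in>K0. algebraic_over (adjoin k S) x"
    "finite S" "card S \<le> d" unfolding trdeg_le_def by blast
  from fe obtain SA where SA: "finite SA" "SA \<subseteq> A" "span_over G SA = A" unfolding finite_ext_def by blast
  have e: "lin_indep_over K0 {}" unfolding lin_indep_over_def by simp
  have bound: "finite V \<and> card V \<le> card SA" if "V \<subseteq> B" "lin_indep_over K0 V" for V
  proof -
    have "lin_indep_over G V" using B(5) that by blast
    moreover have "V \<subseteq> span_over G SA" using that(1) B(2) SA(3) by blast
    ultimately show ?thesis using steinitz[OF G SA(1)] by blast
  qed
  from indep_extend[OF K0(1) _ e bound, of B] obtain T where T: "T \<subseteq> B" "finite T" "B \<subseteq> span_over K0 T"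
    by blast
  have one: "1 \<in> B" using B(1) sf_1[OF K0(1)] by blast
  have kS: "is_subfield (adjoin k S)" by (rule adjoin_sf)
  have talg: "algebraic_over (adjoin k S) t" if t: "t \<in> T" for t
  proof -
    have "algebraic_over K0 t"
      by (rule fin_alg_algebraic[OF K0(1) T(2) T(3) one]) (use B(3) T(1) t in auto)
    moreover have "K0 \<subseteq> alg_closure_in (adjoin k S)" using S(3) unfolding alg_closure_in_def by blast
    ultimately have "algebraic_over (alg_closure_in (adjoin k S)) t" using alg_mono by blast
    then show ?thesis by (rule alg_trans[OF kS])
  qed
  obtain ts where ts: "set ts = T" using finite_list[OF T(2)] by blast
  define ys where "ys = map (\<lambda>t. (t, S)) ts"
  have "valid k d G ys" unfolding ys_def
    by (rule valid_map[OF S(4,5,2)]) (use ts talg S(1) K0(3) in auto)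
  moreover have "A \<subseteq> tw G ys"
  proof -
    have twe: "tw G ys = adjoin G T" unfolding ys_def using tw_map_fst[OF G] ts by simp
    have "B \<subseteq> span_over G T" using T(3) span_field_mono[OF K0(3)] by blast
    then have "span_over G B \<subseteq> span_over G T" by (rule span_trans[OF G])
    also have "\<dots> \<subseteq> adjoin G T" by (rule span_in_sf[OF adjoin_sf adjoin_base adjoin_gen])
    finally show ?thesis using B(4) twe by simp
  qed
  ultimately show ?thesis by blast
qed

lemma lev_valid:
  assumes F: "is_subfield F" and k: "is_subfield k" and lev: "lev_le k F L d"
  shows "\<exists>xs. valid k d F xs \<and> L \<subseteq> tw F xs"
proof -
  from lev obtain m Ks where Ks: "Ks 0 = F" "\<forall>i<m. is_subfield (Ks (Suc i)) \<and> finite_ext (Ks i) (Ks (Suc i)) \<and>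
      ed_le k (Ks i) (Ks (Suc i)) d" "L \<subseteq> Ks m" unfolding lev_le_def by blast
  have "i \<le> m \<Longrightarrow> is_subfield (Ks i) \<and> (\<exists>xs. valid k d F xs \<and> Ks i \<subseteq> tw F xs)" for i
  proof (induction i)
    case 0
    then show ?case using Ks(1) F by (intro conjI exI[of _ "[]"]) auto
  next
    case (Suc i)
    then have i: "i < m" by simp
    from Suc obtain xs where xs: "is_subfield (Ks i)" "valid k d F xs" "Ks i \<subseteq> tw F xs" by auto
    have st: "is_subfield (Ks (Suc i))" "finite_ext (Ks i) (Ks (Suc i))" "ed_le k (Ks i) (Ks (Suc i)) d"
      using Ks(2) i by auto
    from ed_step_valid[OF xs(1) k st(2,3)] obtain ys where ys: "valid k d (Ks i) ys" "Ks (Suc i) \<subseteq> tw (Ks i) ys"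
      by blast
    have "valid k d (tw F xs) ys" by (rule valid_mono[OF xs(3) ys(1)])
    then have "valid k d F (xs @ ys)" using xs(2) by (simp add: valid_append)
    moreover have "Ks (Suc i) \<subseteq> tw F (xs @ ys)"
      using ys(2) tw_mono[OF xs(3), of ys] by (simp add: tw_append)
    ultimately show ?case using st(1) by blast
  qed
  then show ?thesis using Ks(3) by blast
qed

section \<open>Level closure via simple towers\<close>

definition reach :: "'a::field set \<Rightarrow> nat \<Rightarrow> 'a set \<Rightarrow> 'a set" where
  "reach k d F = {x. \<exists>xs. valid k d F xs \<and> x \<in> tw F xs}"

lemma reach_combine:
  assumes "valid k d F xs" "valid k d F ys"
  shows "valid k d F (xs @ ys) \<and> tw F xs \<subseteq> tw F (xs @ ys) \<and> tw F ys \<subseteq> tw F (xs @ ys)"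
proof -
  have "valid k d (tw F xs) ys" by (rule valid_mono[OF tw_base assms(2)])
  moreover have "tw F xs \<subseteq> tw (tw F xs) ys" by (rule tw_base)
  moreover have "tw F ys \<subseteq> tw (tw F xs) ys" by (rule tw_mono[OF tw_base])
  ultimately show ?thesis using assms(1) by (simp add: valid_append tw_append)
qed

lemma reach_finite:
  assumes "finite X" "X \<subseteq> reach k d F"
  shows "\<exists>xs. valid k d F xs \<and> X \<subseteq> tw F xs"
  using assms
proof (induction X rule: finite_induct)
  case empty then show ?case by (intro exI[of _ "[]"]) auto
next
  case (insert x X)
  then obtain xs where xs: "valid k d F xs" "X \<subseteq> tw F xs" by auto
  from insert.prems obtain ys where ys: "valid k d F ys" "x \<in> tw F ys" unfolding reach_def by blast
  from reach_combine[OF xs(1) ys(1)] xs ys show ?case by blast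
qed

lemma reach_sf:
  assumes F: "is_subfield F"
  shows "is_subfield (reach k d F)"
  unfolding is_subfield_def
proof (intro conjI ballI)
  show "0 \<in> reach k d F" "1 \<in> reach k d F" unfolding reach_def
    using F by (auto intro!: exI[of _ "[]"] simp: sf_0 sf_1)
  fix x y assume "x \<in> reach k d F" "y \<in> reach k d F"
  then have "finite {x, y}" "{x, y} \<subseteq> reach k d F" by auto
  from reach_finite[OF this] obtain xs where xs: "valid k d F xs" "x \<in> tw F xs" "y \<in> tw F xs" by auto
  have "x + y \<in> tw F xs" "x * y \<in> tw F xs" using xs tw_sf[OF F] by (auto intro: sf_add sf_mult)
  then show "x + y \<in> reach k d F" "x * y \<in> reach k d F" unfolding reach_def using xs(1) by auto
next
  fix x assume "x \<in> reach k d F"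
  then obtain xs where xs: "valid k d F xs" "x \<in> tw F xs" unfolding reach_def by blast
  have "- x \<in> tw F xs" "inverse x \<in> tw F xs" using xs tw_sf[OF F] by (auto intro: sf_uminus sf_inverse)
  then show "- x \<in> reach k d F" "inverse x \<in> reach k d F" unfolding reach_def using xs(1) by auto
qed

lemma level_closure_reach:
  assumes ac: "\<forall>p::'a poly. degree p > 0 \<longrightarrow> (\<exists>x. poly p x = 0)"
    and F: "is_subfield F" and k: "is_subfield k" and kF: "k \<subseteq> (F::'a::field set)"
  shows "level_closure k d F = reach k d F"
proof (rule subset_antisym)
  let ?C = "{L. is_subfield L \<and> F \<subseteq> L \<and> L \<subseteq> alg_closure_in F \<and> finite_ext F L \<and> lev_le k F L d}"
  have "\<Union>?C \<subseteq> reach k d F"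
  proof
    fix x assume "x \<in> \<Union>?C"
    then obtain L where L: "L \<in> ?C" "x \<in> L" by blast
    then have "lev_le k F L d" by blast
    from lev_valid[OF F k this] obtain xs where "valid k d F xs" "L \<subseteq> tw F xs" by blast
    then show "x \<in> reach k d F" unfolding reach_def using L(2) by blast
  qed
  moreover have "F \<subseteq> reach k d F" unfolding reach_def by (auto intro!: exI[of _ "[]"])
  ultimately show "level_closure k d F \<subseteq> reach k d F"
    unfolding level_closure_def by (rule adjoin_min[OF reach_sf[OF F], rotated])
  show "reach k d F \<subseteq> level_closure k d F"
  proof
    fix x assume "x \<in> reach k d F"
    then obtain xs where xs: "valid k d F xs" "x \<in> tw F xs" unfolding reach_def by blast
    have "is_subfield (tw F xs)" "F \<subseteq> tw F xs" "tw F xs \<subseteq> alg_closure_in F" "finite_ext F (tw F xs)"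
      "lev_le k F (tw F xs) d"
      using tw_sf[OF F] tw_base tw_finite_ext[OF F kF xs(1)] valid_lev[OF ac F k kF xs(1)] by auto
    then have "tw F xs \<in> ?C" by (intro CollectI conjI)
    then have "x \<in> \<Union>?C" using xs(2) by blast
    moreover have "\<Union>?C \<subseteq> adjoin F (\<Union>?C)" by (rule adjoin_gen)
    ultimately have "x \<in> adjoin F (\<Union>?C)" by blast
    then show "x \<in> level_closure k d F" unfolding level_closure_def .
  qed
qed

lemma reach_mono:
  assumes "F \<subseteq> E"
  shows "reach k d F \<subseteq> reach k d E"
  unfolding reach_def using valid_mono[OF assms] tw_mono[OF assms] by blast

lemma reach_d_mono: "d \<le> n \<Longrightarrow> reach k d F \<subseteq> reach k n F"
  unfolding reach_def using valid_d_mono by blast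

lemma finite_subset_union:
  assumes "finite X" "\<forall>x\<in>X. \<exists>G. finite G \<and> G \<subseteq> E \<and> x \<in> adjoin K (G \<union> Y)"
  shows "\<exists>G. finite G \<and> G \<subseteq> E \<and> X \<subseteq> adjoin K (G \<union> Y)"
  using assms
proof (induction X rule: finite_induct)
  case empty then show ?case by (intro exI[of _ "{}"]) auto
next
  case (insert x X)
  then obtain G1 where G1: "finite G1" "G1 \<subseteq> E" "X \<subseteq> adjoin K (G1 \<union> Y)" by auto
  from insert.prems obtain G2 where G2: "finite G2" "G2 \<subseteq> E" "x \<in> adjoin K (G2 \<union> Y)" by auto
  have "adjoin K (G1 \<union> Y) \<subseteq> adjoin K ((G1 \<union> G2) \<union> Y)" "adjoin K (G2 \<union> Y) \<subseteq> adjoin K ((G1 \<union> G2) \<union> Y)"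
    by (rule adjoin_mono; auto)+
  then show ?case using G1 G2 by (intro exI[of _ "G1 \<union> G2"]) auto
qed

lemma descent:
  assumes K: "is_subfield K" and E: "is_subfield E" and KE: "K \<subseteq> E"
  shows "valid k d E xs \<Longrightarrow> finite X \<Longrightarrow> X \<subseteq> tw E xs \<Longrightarrow>
    \<exists>G. finite G \<and> G \<subseteq> E \<and> valid k d (adjoin K G) xs \<and> X \<subseteq> tw (adjoin K G) xs"
proof (induction xs arbitrary: X rule: rev_induct)
  case Nil
  then show ?case using adjoin_gen[of X K] by (intro exI[of _ X]) auto
next
  case (snoc x xs)
  obtain b S where x: "x = (b, S)" by (cases x)
  let ?Y = "fst ` set (xs @ [x])"
  have v: "valid k d E xs" "S \<subseteq> tw E xs" "finite S" "card S \<le> d" "alg_indep k S" "algebraic_over (adjoin k S) b"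
    using snoc.prems(1) x by (auto simp: valid_append)
  have "\<forall>y\<in>X. \<exists>G. finite G \<and> G \<subseteq> E \<and> y \<in> adjoin K (G \<union> ?Y)"
  proof
    fix y assume "y \<in> X"
    then have "y \<in> adjoin E ?Y" using snoc.prems(3) tw_adjoin[OF E] by blast
    then show "\<exists>G. finite G \<and> G \<subseteq> E \<and> y \<in> adjoin K (G \<union> ?Y)" by (rule adjoin_directed[OF K KE])
  qed
  from finite_subset_union[OF snoc.prems(2) this] obtain G1 where
    G1: "finite G1" "G1 \<subseteq> E" "X \<subseteq> adjoin K (G1 \<union> ?Y)" by blast
  from snoc.IH[OF v(1) v(3) v(2)] obtain G2 where
    G2: "finite G2" "G2 \<subseteq> E" "valid k d (adjoin K G2) xs" "S \<subseteq> tw (adjoin K G2) xs" by blast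
  let ?G = "G1 \<union> G2"
  have m: "adjoin K G2 \<subseteq> adjoin K ?G" by (rule adjoin_mono) auto
  have "valid k d (adjoin K ?G) xs" by (rule valid_mono[OF m G2(3)])
  moreover have "S \<subseteq> tw (adjoin K ?G) xs" using G2(4) tw_mono[OF m] by blast
  ultimately have "valid k d (adjoin K ?G) (xs @ [x])" using v x by (simp add: valid_append)
  moreover have "X \<subseteq> tw (adjoin K ?G) (xs @ [x])"
  proof -
    have "adjoin K (G1 \<union> ?Y) \<subseteq> adjoin K (?G \<union> ?Y)" by (rule adjoin_mono) auto
    also have "\<dots> = adjoin (adjoin K ?G) ?Y" by (simp add: adjoin_adjoin)
    also have "\<dots> = tw (adjoin K ?G) (xs @ [x])" by (simp add: tw_adjoin[OF adjoin_sf])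
    finally show ?thesis using G1(3) by blast
  qed
  ultimately show ?case using G1 G2 by (intro exI[of _ ?G]) auto
qed



lemma lev_le_mono: "L' \<subseteq> L \<Longrightarrow> lev_le k K L d \<Longrightarrow> lev_le k K L' d"
  unfolding lev_le_def by blast

lemma level_closure_sf: "is_subfield (level_closure k d F)"
  unfolding level_closure_def by (rule adjoin_sf)

lemma level_closure_base: "F \<subseteq> level_closure k d F"
  unfolding level_closure_def by (rule adjoin_base)

theorem proposition6p3:
  fixes k K E :: "'a::field set" and d :: nat
  assumes alg_closed: "\<forall>p::'a poly. degree p > 0 \<longrightarrow> (\<exists>x. poly p x = 0)"
    and alg_over_E: "\<forall>x::'a. algebraic_over E x"
    and fields: "is_subfield k" "is_subfield K" "is_subfield E"
    and incl: "k \<subseteq> K" "K \<subseteq> E"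
  shows
    "(\<forall>L. is_subfield L \<and> K \<subseteq> L \<and> L \<subseteq> alg_closure_in K \<and> finite_ext K L \<longrightarrow>
         (lev_le k K L d \<longleftrightarrow> L \<subseteq> level_closure k d K))
     \<and> (level_closure k d K \<subseteq> level_closure k d E
        \<and> (finite_ext K E \<and> lev_le k K E d \<longrightarrow> level_closure k d K = level_closure k d E))
     \<and> level_closure k d E =
         \<Union>{level_closure k d F | F. is_subfield F \<and> K \<subseteq> F \<and> F \<subseteq> E \<and>
                                    (\<exists>S. finite S \<and> F = adjoin K S)}
     \<and> (\<forall>n\<ge>d. level_closure k n (level_closure k d K) = level_closure k n K)
     \<and> level_closure k d (level_closure k d K) = level_closure k d K"
proof -
  note ac = alg_closed
  note k = fields(1) and Ksf = fields(2) and Esf = fields(3)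
  have kE: "k \<subseteq> E" using incl by blast
  have LR: "level_closure k n F = reach k n F" if "is_subfield F" "k \<subseteq> F" for F n
    by (rule level_closure_reach[OF ac that(1) k that(2)])
  have mono: "level_closure k n F \<subseteq> level_closure k n G"
    if "is_subfield F" "is_subfield G" "k \<subseteq> F" "F \<subseteq> G" for F G n
    using LR[OF that(1,3)] LR[OF that(2)] that reach_mono[OF that(4)] by auto
  have a: "lev_le k K L d \<longleftrightarrow> L \<subseteq> level_closure k d K"
    if L: "is_subfield L" "K \<subseteq> L" "L \<subseteq> alg_closure_in K" "finite_ext K L" for L
  proof
    assume lev: "lev_le k K L d"
    let ?C = "{L. is_subfield L \<and> K \<subseteq> L \<and> L \<subseteq> alg_closure_in K \<and> finite_ext K L \<and> lev_le k K L d}"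
    have "L \<in> ?C" using L lev by blast
    then have "L \<subseteq> \<Union>?C" by blast
    also have "\<Union>?C \<subseteq> adjoin K (\<Union>?C)" by (rule adjoin_gen)
    finally show "L \<subseteq> level_closure k d K" unfolding level_closure_def .
  next
    assume sub: "L \<subseteq> level_closure k d K"
    from L(4) obtain SL where SL: "finite SL" "SL \<subseteq> L" "span_over K SL = L" unfolding finite_ext_def by blast
    have "SL \<subseteq> reach k d K" using SL(2) sub LR[OF Ksf incl(1)] by blast
    from reach_finite[OF SL(1) this] obtain xs where xs: "valid k d K xs" "SL \<subseteq> tw K xs" by blast
    have "L \<subseteq> tw K xs" using span_in_sf[OF tw_sf[OF Ksf] tw_base xs(2)] SL(3) by simp
    moreover have "lev_le k K (tw K xs) d" by (rule valid_lev[OF ac Ksf k incl(1) xs(1)])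
    ultimately show "lev_le k K L d" by (rule lev_le_mono)
  qed
  have b1: "level_closure k d K \<subseteq> level_closure k d E" by (rule mono[OF Ksf Esf incl])
  have b2: "level_closure k d K = level_closure k d E" if fe: "finite_ext K E" and lev: "lev_le k K E d"
  proof (rule subset_antisym[OF b1])
    from lev_valid[OF Ksf k lev] obtain ys where ys: "valid k d K ys" "E \<subseteq> tw K ys" by blast
    show "level_closure k d E \<subseteq> level_closure k d K"
    proof
      fix x assume "x \<in> level_closure k d E"
      then obtain xs where xs: "valid k d E xs" "x \<in> tw E xs" using LR[OF Esf kE] unfolding reach_def by blast
      have "valid k d (tw K ys) xs" by (rule valid_mono[OF ys(2) xs(1)])
      then have "valid k d K (ys @ xs)" using ys(1) by (simp add: valid_append)
      moreover have "x \<in> tw K (ys @ xs)" using tw_mono[OF ys(2), of xs] xs(2) by (auto simp: tw_append)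
      ultimately show "x \<in> level_closure k d K" using LR[OF Ksf incl(1)] unfolding reach_def by blast
    qed
  qed
  have c: "level_closure k d E =
         \<Union>{level_closure k d F | F. is_subfield F \<and> K \<subseteq> F \<and> F \<subseteq> E \<and> (\<exists>S. finite S \<and> F = adjoin K S)}"
    (is "_ = \<Union>?U")
  proof (rule subset_antisym)
    show "\<Union>?U \<subseteq> level_closure k d E"
    proof
      fix x assume "x \<in> \<Union>?U"
      then obtain F where F: "is_subfield F" "K \<subseteq> F" "F \<subseteq> E" "x \<in> level_closure k d F" by blast
      have "k \<subseteq> F" using F incl by blast
      then show "x \<in> level_closure k d E" using mono[OF F(1) Esf _ F(3)] F(4) by blast
    qed
    show "level_closure k d E \<subseteq> \<Union>?U"
    proof
      fix x assume "x \<in> level_closure k d E"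
      then obtain xs where xs: "valid k d E xs" "x \<in> tw E xs" using LR[OF Esf kE] unfolding reach_def by blast
      from descent[OF Ksf Esf incl(2) xs(1), of "{x}"] xs(2) obtain G where
        G: "finite G" "G \<subseteq> E" "valid k d (adjoin K G) xs" "x \<in> tw (adjoin K G) xs" by auto
      let ?F = "adjoin K G"
      have Fsf: "is_subfield ?F" by (rule adjoin_sf)
      have KF: "K \<subseteq> ?F" by (rule adjoin_base)
      have FE: "?F \<subseteq> E" by (rule adjoin_min[OF Esf incl(2) G(2)])
      have kF: "k \<subseteq> ?F" using incl KF by blast
      have "x \<in> level_closure k d ?F" using LR[OF Fsf kF] G(3,4) unfolding reach_def by blast
      moreover have "level_closure k d ?F \<in> ?U" using Fsf KF FE G(1) by blast
      ultimately show "x \<in> \<Union>?U" by blast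
    qed
  qed
  let ?D = "level_closure k d K"
  have Dsf: "is_subfield ?D" by (rule level_closure_sf)
  have KD: "K \<subseteq> ?D" by (rule level_closure_base)
  have kD: "k \<subseteq> ?D" using KD incl by blast
  have d: "level_closure k n ?D = level_closure k n K" if n: "n \<ge> d" for n
  proof (rule subset_antisym)
    show "level_closure k n K \<subseteq> level_closure k n ?D" by (rule mono[OF Ksf Dsf incl(1) KD])
    show "level_closure k n ?D \<subseteq> level_closure k n K"
    proof
      fix x assume "x \<in> level_closure k n ?D"
      then obtain xs where xs: "valid k n ?D xs" "x \<in> tw ?D xs" using LR[OF Dsf kD] unfolding reach_def by blast
      from descent[OF Ksf Dsf KD xs(1), of "{x}"] xs(2) obtain G where
        G: "finite G" "G \<subseteq> ?D" "valid k n (adjoin K G) xs" "x \<in> tw (adjoin K G) xs" by auto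
      have "G \<subseteq> reach k d K" using G(2) LR[OF Ksf incl(1)] by blast
      from reach_finite[OF G(1) this] obtain ys where ys: "valid k d K ys" "G \<subseteq> tw K ys" by blast
      have sub: "adjoin K G \<subseteq> tw K ys" by (rule adjoin_min[OF tw_sf[OF Ksf] tw_base ys(2)])
      have "valid k n K ys" by (rule valid_d_mono[OF n ys(1)])
      moreover have "valid k n (tw K ys) xs" by (rule valid_mono[OF sub G(3)])
      ultimately have "valid k n K (ys @ xs)" by (simp add: valid_append)
      moreover have "x \<in> tw K (ys @ xs)" using tw_mono[OF sub, of xs] G(4) by (auto simp: tw_append)
      ultimately show "x \<in> level_closure k n K" using LR[OF Ksf incl(1)] unfolding reach_def by blast
    qed
  qed
  show ?thesis using a b1 b2 c d[of d] d by blast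
qed

end
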